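(* In the Coxeter arrangement of type $D_n$ ($n\ge2$): for $1\le i<j\le n$ the hyperplane $H_{i,j}=\{x_i=x_j\}$ has exactly $2^{j-i-1}$ shards, and the hyperplane $H_{i,-j}=\{x_i=-x_j\}$ has exactly $2^{j-i}3^{i-1}-2^{j-2}$ shards. Consequently the arrangement has $\sum_{1\le i<j\le n}\big(2^{j-i-1}+2^{j-i}3^{i-1}-2^{j-2}\big)=3^n-n2^{n-1}-n-1$ shards in total.
   Context: Shards. Let $V$ be a real Euclidean space with inner product $\langle\cdot,\cdot\rangle$, $\Phi\subset V$ a finite root system with a chosen set of positive roots $\Phi^+$, and $\mathcal A=\{H_\beta:\beta\in\Phi^+\}$ with $H_\beta=\{\lambda\in V:\langle\lambda,\beta\rangle=0\}$ (the Coxeter arrangement). The base region is $B=\{\lambda\in V:\langle\lambda,\beta\rangle>0\text{ for all }\beta\in\Phi^+\}$. For distinct $H,H'\in\mathcal A$ let $\mathcal A(H,H')$ be the set of hyperplanes of $\mathcal A$ containing $H\cap H'$ (a rank two subarrangement). Exactly one connected component $B'$ of $V\setminus\bigcup\mathcal A(H,H')$ contains $B$, and exactly two hyperplanes of $\mathcal A(H,H')$ contain facets of the closure of $B'$; these are the basic hyperplanes of $\mathcal A(H,H')$. Each non-basic $H''\in\mathcal A(H,H')$ is said to be cut by each of the two basic hyperplanes of $\mathcal A(H,H')$. For $H\in\mathcal A$ let $L_H$ be the set of hyperplanes of $\mathcal A$ that cut $H$ in some rank two subarrangement; the shards of $H$ are the closures of the connected components of $H\setminus\bigcup_{H_\gamma\in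 L_H}(H\cap H_\gamma)$. A shard of $\mathcal A$ is a shard of some $H\in\mathcal A$. Type $D_n$: $V=\mathbb R^n$ with the standard inner product, $\Phi^+=\{\varepsilon_j\pm\varepsilon_i:1\le i<j\le n\}$, base region $B=\{-x_2<\pm x_1<x_2<\cdots<x_n\}$; the hyperplanes are $H_{i,j}=\{x_i=x_j\}$ (root $\varepsilon_j-\varepsilon_i$) and $H_{i,-j}=\{x_i=-x_j\}$ (root $\varepsilon_j+\varepsilon_i$), $1\le i<j\le n$. *)

theory Defs
  imports "HOL-Analysis.Analysis"
begin

(* The Euclidean space R^n is represented as the functions nat => real supported
   in {1..n}, with the product topology (which restricted to this set is the
   Euclidean topology) and the standard inner product. *)
definition Vsp :: "nat \<Rightarrow> (nat \<Rightarrow> real) set" where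
  "Vsp n = {x. \<forall>k. k \<notin> {1..n} \<longrightarrow> x k = 0}"

definition ip :: "nat \<Rightarrow> (nat \<Rightarrow> real) \<Rightarrow> (nat \<Rightarrow> real) \<Rightarrow> real" where
  "ip n x y = (\<Sum>k=1..n. x k * y k)"

definition hyp :: "nat \<Rightarrow> (nat \<Rightarrow> real) \<Rightarrow> (nat \<Rightarrow> real) set" where
  "hyp n \<beta> = {x \<in> Vsp n. ip n x \<beta> = 0}"

definition arr :: "nat \<Rightarrow> (nat \<Rightarrow> real) set \<Rightarrow> (nat \<Rightarrow> real) set set" where
  "arr n P = hyp n ` P"

definition base :: "nat \<Rightarrow> (nat \<Rightarrow> real) set \<Rightarrow> (nat \<Rightarrow> real) set" where
  "base n P = {x \<in> Vsp n. \<forall>\<beta>\<in>P. ip n x \<beta> > 0}"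

definition subarr :: "nat \<Rightarrow> (nat \<Rightarrow> real) set \<Rightarrow> (nat \<Rightarrow> real) set \<Rightarrow> (nat \<Rightarrow> real) set
    \<Rightarrow> (nat \<Rightarrow> real) set set" where
  "subarr n P H H' = {H'' \<in> arr n P. H \<inter> H' \<subseteq> H''}"

definition base2 :: "nat \<Rightarrow> (nat \<Rightarrow> real) set \<Rightarrow> (nat \<Rightarrow> real) set \<Rightarrow> (nat \<Rightarrow> real) set
    \<Rightarrow> (nat \<Rightarrow> real) set" where
  "base2 n P H H' =
     {y. \<exists>b\<in>base n P. connected_component (Vsp n - \<Union>(subarr n P H H')) b y}"

(* H'' contains a facet of the closure of B': H'' \<inter> closure B' has nonempty
   interior relative to H'' (i.e. is (n-1)-dimensional) *)
definition contains_facet :: "(nat \<Rightarrow> real) set \<Rightarrow> (nat \<Rightarrow> real) set \<Rightarrow> bool" where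
  "contains_facet H'' C \<longleftrightarrow> (\<exists>U. open U \<and> U \<inter> H'' \<noteq> {} \<and> U \<inter> H'' \<subseteq> closure C)"

definition basic :: "nat \<Rightarrow> (nat \<Rightarrow> real) set \<Rightarrow> (nat \<Rightarrow> real) set \<Rightarrow> (nat \<Rightarrow> real) set
    \<Rightarrow> (nat \<Rightarrow> real) set set" where
  "basic n P H H' = {H'' \<in> subarr n P H H'. contains_facet H'' (base2 n P H H')}"

definition cuts :: "nat \<Rightarrow> (nat \<Rightarrow> real) set \<Rightarrow> (nat \<Rightarrow> real) set \<Rightarrow> (nat \<Rightarrow> real) set \<Rightarrow> bool" where
  "cuts n P G H \<longleftrightarrow> (\<exists>H1 H2. H1 \<in> arr n P \<and> H2 \<in> arr n P \<and> H1 \<noteq> H2 \<and>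
      H \<in> subarr n P H1 H2 \<and> H \<notin> basic n P H1 H2 \<and> G \<in> basic n P H1 H2)"

definition cutting :: "nat \<Rightarrow> (nat \<Rightarrow> real) set \<Rightarrow> (nat \<Rightarrow> real) set \<Rightarrow> (nat \<Rightarrow> real) set set" where
  "cutting n P H = {G \<in> arr n P. cuts n P G H}"

definition shards_of :: "nat \<Rightarrow> (nat \<Rightarrow> real) set \<Rightarrow> (nat \<Rightarrow> real) set \<Rightarrow> (nat \<Rightarrow> real) set set" where
  "shards_of n P H = closure ` components (H - \<Union>{H \<inter> G | G. G \<in> cutting n P H})"

definition shards :: "nat \<Rightarrow> (nat \<Rightarrow> real) set \<Rightarrow> (nat \<Rightarrow> real) set set" where
  "shards n P = (\<Union>H\<in>arr n P. shards_of n P H)"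

definition eps :: "nat \<Rightarrow> nat \<Rightarrow> real" where
  "eps i = (\<lambda>k. if k = i then 1 else 0)"

definition posD :: "nat \<Rightarrow> (nat \<Rightarrow> real) set" where
  "posD n = {(\<lambda>k. eps j k - eps i k) | i j. 1 \<le> i \<and> i < j \<and> j \<le> n}
          \<union> {(\<lambda>k. eps j k + eps i k) | i j. 1 \<le> i \<and> i < j \<and> j \<le> n}"

definition Hm :: "nat \<Rightarrow> nat \<Rightarrow> nat \<Rightarrow> (nat \<Rightarrow> real) set" where
  "Hm n i j = {x \<in> Vsp n. x i = x j}"

definition Hp :: "nat \<Rightarrow> nat \<Rightarrow> nat \<Rightarrow> (nat \<Rightarrow> real) set" where
  "Hp n i j = {x \<in> Vsp n. x i = - x j}"

end

theory Submission
  imports Defs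
begin


definition mr :: "nat \<Rightarrow> nat \<Rightarrow> nat \<Rightarrow> real" where "mr i j = (\<lambda>k. eps j k - eps i k)"
definition pr :: "nat \<Rightarrow> nat \<Rightarrow> nat \<Rightarrow> real" where "pr i j = (\<lambda>k. eps j k + eps i k)"

lemma posD_alt: "posD n = {mr i j | i j. 1 \<le> i \<and> i < j \<and> j \<le> n} \<union> {pr i j | i j. 1 \<le> i \<and> i < j \<and> j \<le> n}"
  by (simp add: posD_def mr_def pr_def)

lemma ip_sym: "ip n x y = ip n y x"
  by (simp add: ip_def mult.commute)

lemma ip_lin: "ip n (\<lambda>k. a * x k + b * y k) z = a * ip n x z + b * ip n y z"
  by (simp add: ip_def sum.distrib sum_distrib_left algebra_simps)

lemma ip_add: "ip n (\<lambda>k. x k + y k) z = ip n x z + ip n y z"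
  by (simp add: ip_def sum.distrib algebra_simps)

lemma ip_diff: "ip n (\<lambda>k. x k - y k) z = ip n x z - ip n y z"
  by (simp add: ip_def sum_subtractf algebra_simps)

lemma ip_scale: "ip n (\<lambda>k. a * x k) z = a * ip n x z"
  by (simp add: ip_def sum_distrib_left algebra_simps)

lemma ip_eps: "1 \<le> j \<Longrightarrow> j \<le> n \<Longrightarrow> ip n x (eps j) = x j"
  by (simp add: ip_def eps_def if_distrib cong: if_cong)

lemma ip_mr: "1 \<le> i \<Longrightarrow> i \<le> n \<Longrightarrow> 1 \<le> j \<Longrightarrow> j \<le> n \<Longrightarrow> ip n x (mr i j) = x j - x i"
  using ip_eps[of j n x] ip_eps[of i n x]
  by (simp add: ip_def mr_def sum_subtractf algebra_simps)

lemma ip_pr: "1 \<le> i \<Longrightarrow> i \<le> n \<Longrightarrow> 1 \<le> j \<Longrightarrow> j \<le> n \<Longrightarrow> ip n x (pr i j) = x j + x i"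
  using ip_eps[of j n x] ip_eps[of i n x]
  by (simp add: ip_def pr_def sum.distrib algebra_simps)

lemma mr_V: "1 \<le> i \<Longrightarrow> j \<le> n \<Longrightarrow> i < j \<Longrightarrow> mr i j \<in> Vsp n"
  by (auto simp: Vsp_def mr_def eps_def)
lemma pr_V: "1 \<le> i \<Longrightarrow> j \<le> n \<Longrightarrow> i < j \<Longrightarrow> pr i j \<in> Vsp n"
  by (auto simp: Vsp_def pr_def eps_def)

lemma mr_eq: "mr k l = mr i j \<longleftrightarrow> (k = i \<and> l = j) \<or> (k = l \<and> i = j)"
  by (auto simp: mr_def eps_def fun_eq_iff)


lemma cont_ip: "continuous_on UNIV (\<lambda>x::nat\<Rightarrow>real. ip n x \<beta>)"
  unfolding ip_def by (intro continuous_intros continuous_on_product_coordinates)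

lemma cont_line: "continuous_on UNIV (\<lambda>s::real. (\<lambda>k. p k + s * d k) :: nat \<Rightarrow> real)"
  by (intro continuous_intros continuous_on_coordinatewise_then_product)

lemma open_ip_gt: "open {x. ip n x \<beta> > c}"
  using open_Collect_less[OF continuous_on_const cont_ip] by simp
lemma open_ip_lt: "open {x. ip n x \<beta> < c}"
  using open_Collect_less[OF cont_ip continuous_on_const] by simp
lemma closed_ip_ge: "closed {x. ip n x \<beta> \<ge> c}"
  using closed_Collect_le[OF continuous_on_const cont_ip] by simp
lemma closed_ip_eq: "closed {x. ip n x \<beta> = c}"
  using closed_Collect_eq[OF cont_ip continuous_on_const] by simp

lemma closed_Vsp: "closed (Vsp n)"
proof -
  have "Vsp n = (\<Inter>k\<in>-{1..n}. {x. x k = 0})" by (auto simp: Vsp_def)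
  moreover have "closed {x::nat\<Rightarrow>real. x k = 0}" for k
    by (rule closed_Collect_eq) (simp_all add: continuous_on_product_coordinates)
  ultimately show ?thesis by auto
qed

lemma closed_hyp: "closed (hyp n \<beta>)"
proof -
  have "hyp n \<beta> = Vsp n \<inter> {x. ip n x \<beta> = 0}" by (auto simp: hyp_def)
  thus ?thesis using closed_Vsp closed_ip_eq by auto
qed

lemma perturb:
  fixes p d :: "nat \<Rightarrow> real"
  assumes "open U" "p \<in> U"
  shows "\<exists>e>0. \<forall>s. \<bar>s\<bar> < e \<longrightarrow> (\<lambda>k. p k + s * d k) \<in> U"
proof -
  let ?g = "\<lambda>s::real. (\<lambda>k. p k + s * d k) :: nat \<Rightarrow> real"
  have "open (?g -` U)"
    using continuous_on_open_vimage[OF open_UNIV] cont_line assms(1) by auto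
  moreover have "0 \<in> ?g -` U" using assms(2) by simp
  ultimately obtain e where "e > 0" "ball 0 e \<subseteq> ?g -` U"
    using open_contains_ball by blast
  thus ?thesis by (intro exI[of _ e]) (auto simp: dist_real_def)
qed



definition myconvex :: "(nat \<Rightarrow> real) set \<Rightarrow> bool" where
  "myconvex C \<longleftrightarrow> (\<forall>x\<in>C. \<forall>y\<in>C. \<forall>t::real. 0 \<le> t \<and> t \<le> 1 \<longrightarrow> (\<lambda>k. x k + t * (y k - x k)) \<in> C)"

lemma myconvex_connected:
  assumes "myconvex C" shows "connected C"
proof (cases "C = {}")
  case True thus ?thesis by simp
next
  case False
  then obtain c where c: "c \<in> C" by auto
  let ?seg = "\<lambda>y. (\<lambda>t::real. (\<lambda>k. c k + t * (y k - c k)) :: nat \<Rightarrow> real) ` {0..1}"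
  have "C = \<Union>(?seg ` C)"
  proof
    show "C \<subseteq> \<Union>(?seg ` C)"
    proof
      fix y assume "y \<in> C"
      have "y \<in> ?seg y" by (rule image_eqI[where x=1]) auto
      thus "y \<in> \<Union>(?seg ` C)" using \<open>y \<in> C\<close> by blast
    qed
    show "\<Union>(?seg ` C) \<subseteq> C"
    proof
      fix z assume "z \<in> \<Union>(?seg ` C)"
      then obtain y t where "y \<in> C" "t \<in> {0..1}" "z = (\<lambda>k. c k + t * (y k - c k))" by blast
      thus "z \<in> C" using assms c unfolding myconvex_def by simp
    qed
  qed
  moreover have "connected (\<Union>(?seg ` C))"
  proof (rule connected_Union)
    fix s assume "s \<in> ?seg ` C"
    then obtain y where "s = ?seg y" by auto
    moreover have "continuous_on {0..1} (\<lambda>t::real. (\<lambda>k. c k + t * (y k - c k)) :: nat \<Rightarrow> real)"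
      by (intro continuous_intros continuous_on_coordinatewise_then_product)
    ultimately show "connected s" using connected_continuous_image connected_Icc by blast
  next
    have "c \<in> ?seg y" for y
    proof -
      show ?thesis by (rule image_eqI[where x=0]) auto
    qed
    thus "\<Inter>(?seg ` C) \<noteq> {}" by blast
  qed
  ultimately show ?thesis by simp
qed



lemma GL_comp:
  fixes S :: "'a::topological_space set"
  assumes conn: "\<And>x. x \<in> S \<Longrightarrow> connected {y\<in>S. f y = f x}"
      and op: "\<And>x. x \<in> S \<Longrightarrow> \<exists>Q. open Q \<and> {y\<in>S. f y = f x} = S \<inter> Q"
      and x: "x \<in> S"
  shows "connected_component_set S x = {y\<in>S. f y = f x}"
proof
  show "{y\<in>S. f y = f x} \<subseteq> connected_component_set S x"
    using connected_component_maximal[of x "{y\<in>S. f y = f x}" S] conn x by auto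
next
  let ?C = "connected_component_set S x"
  define Q where "Q z = (SOME Q. open Q \<and> {y\<in>S. f y = f z} = S \<inter> Q)" for z
  have QQ: "open (Q z) \<and> {y\<in>S. f y = f z} = S \<inter> Q z" if "z \<in> S" for z
    unfolding Q_def using someI_ex[OF op[OF that]] .
  let ?U = "Q x" and ?V = "\<Union>z\<in>{z\<in>S. f z \<noteq> f x}. Q z"
  have "open ?U" using QQ[OF x] by simp
  have "open ?V" by (rule open_UN) (use QQ in blast)
  have disj: "?U \<inter> ?V \<inter> ?C = {}"
  proof -
    { fix w assume w: "w \<in> ?U" "w \<in> ?V" "w \<in> ?C"
      then obtain z where z: "z \<in> S" "f z \<noteq> f x" "w \<in> Q z" by auto
      have wS: "w \<in> S" using w(3) connected_component_subset by blast
      have "f w = f x" using QQ[OF x] w(1) wS by blast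
      moreover have "f w = f z" using QQ[OF z(1)] z(3) wS by blast
      ultimately have False using z(2) by simp }
    thus ?thesis by blast
  qed
  have sub: "?C \<subseteq> ?U \<union> ?V"
  proof
    fix w assume "w \<in> ?C"
    hence wS: "w \<in> S" using connected_component_subset by blast
    show "w \<in> ?U \<union> ?V"
    proof (cases "f w = f x")
      case True thus ?thesis using QQ[OF x] wS by blast
    next
      case False
      have "w \<in> Q w" using QQ[OF wS] wS by blast
      thus ?thesis using False wS by blast
    qed
  qed
  have "?U \<inter> ?C = {} \<or> ?V \<inter> ?C = {}"
    by (rule connectedD[OF connected_connected_component \<open>open ?U\<close> \<open>open ?V\<close> disj sub])
  moreover have "x \<in> ?U \<inter> ?C" using QQ[OF x] x by auto
  ultimately have "?V \<inter> ?C = {}" by blast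
  thus "?C \<subseteq> {y\<in>S. f y = f x}"
  proof -
    { fix w assume "w \<in> ?C"
      hence wS: "w \<in> S" using connected_component_subset by blast
      have "f w = f x"
      proof (rule ccontr)
        assume "f w \<noteq> f x"
        moreover have "w \<in> Q w" using QQ[OF wS] wS by blast
        ultimately have "w \<in> ?V \<inter> ?C" using wS \<open>w \<in> ?C\<close> by blast
        thus False using \<open>?V \<inter> ?C = {}\<close> by blast
      qed
      hence "w \<in> {y\<in>S. f y = f x}" using wS by simp }
    thus ?thesis by blast
  qed
qed

lemma GL:
  fixes S :: "'a::topological_space set"
  assumes conn: "\<And>x. x \<in> S \<Longrightarrow> connected {y\<in>S. f y = f x}"
      and op: "\<And>x. x \<in> S \<Longrightarrow> \<exists>Q. open Q \<and> {y\<in>S. f y = f x} = S \<inter> Q"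
  shows "components S = (\<lambda>x. {y\<in>S. f y = f x}) ` S"
    and "closure ` components S = (\<lambda>\<sigma>. closure {y\<in>S. f y = \<sigma>}) ` (f ` S)"
    and "inj_on (\<lambda>\<sigma>. closure {y\<in>S. f y = \<sigma>}) (f ` S)"
proof -
  show c: "components S = (\<lambda>x. {y\<in>S. f y = f x}) ` S"
    unfolding components_def using GL_comp[OF conn op] by auto
  thus "closure ` components S = (\<lambda>\<sigma>. closure {y\<in>S. f y = \<sigma>}) ` (f ` S)"
    by (simp add: image_image)
  show "inj_on (\<lambda>\<sigma>. closure {y\<in>S. f y = \<sigma>}) (f ` S)"
  proof (rule inj_onI)
    fix s1 s2 assume s: "s1 \<in> f ` S" "s2 \<in> f ` S"
      and eq: "closure {y\<in>S. f y = s1} = closure {y\<in>S. f y = s2}"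
    obtain x1 where x1: "x1 \<in> S" "f x1 = s1" using s by auto
    obtain O1 where O1: "open O1" "{y\<in>S. f y = s1} = S \<inter> O1" using op[OF x1(1)] x1 by auto
    have "x1 \<in> O1 \<inter> closure {y\<in>S. f y = s2}"
      using O1 x1 eq closure_subset[of "{y\<in>S. f y = s1}"] by blast
    hence "O1 \<inter> {y\<in>S. f y = s2} \<noteq> {}" using open_Int_closure_eq_empty[OF O1(1)] by blast
    then obtain w where "w \<in> O1" "w \<in> S" "f w = s2" by blast
    moreover hence "f w = s1" using O1(2) by blast
    ultimately show "s1 = s2" by simp
  qed
qed


lemma ip_self_zero:
  assumes "x \<in> Vsp n" "ip n x x = 0" shows "x = (\<lambda>k. 0)"
proof
  fix k
  have "\<forall>k\<in>{1..n}. x k * x k = 0"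
    using assms(2) sum_nonneg_eq_0_iff[of "{1..n}" "\<lambda>k. x k * x k"] by (simp add: ip_def)
  thus "x k = 0" using assms(1) by (cases "k \<in> {1..n}") (auto simp: Vsp_def)
qed

lemma arith27:
  fixes a b c s1 s2 p1 p2 :: real
  assumes "c \<in> {-1,0,1}" "s1 \<in> {-1,0,1}" "s2 \<in> {-1,0,1}"
    "a = (2 * s1 - c * s2)/(4 - c^2)" "b = (2 * s2 - c * s1)/(4 - c^2)"
    "a * s1 + b * s2 = 2" "a * p1 + b * p2 > 0" "p1 > 0" "p2 > 0"
  shows "(a = 1 \<and> b = 1) \<or> (a = 1 \<and> b = -1) \<or> (a = -1 \<and> b = 1)"
  using assms by (auto simp: field_simps power2_eq_square)

lemma ip_comb: "ip n (\<lambda>k. x k - a * y k) z = ip n x z - a * ip n y z"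
  by (simp add: ip_def sum_subtractf sum_distrib_left algebra_simps)
lemma ip_comb2: "ip n (\<lambda>k. x k - a * y k - b * w k) z = ip n x z - a * ip n y z - b * ip n w z"
  by (simp only: ip_comb)
lemma ip_comb3: "ip n (\<lambda>k. a * y k + b * w k) z = a * ip n y z + b * ip n w z"
proof -
  have "ip n (\<lambda>k. a * y k + b * w k) z = (\<Sum>k=1..n. a * (y k * z k) + b * (w k * z k))"
    by (simp add: ip_def algebra_simps)
  also have "... = (\<Sum>k=1..n. a * (y k * z k)) + (\<Sum>k=1..n. b * (w k * z k))"
    by (rule sum.distrib)
  also have "... = a * ip n y z + b * ip n w z" by (simp add: ip_def sum_distrib_left)
  finally show ?thesis .
qed

locale rs =
  fixes n :: nat and P :: "(nat \<Rightarrow> real) set" and b0 :: "nat \<Rightarrow> real"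
  assumes fin: "finite P" and inV: "\<And>\<delta>. \<delta> \<in> P \<Longrightarrow> \<delta> \<in> Vsp n"
    and nrm: "\<And>\<delta>. \<delta> \<in> P \<Longrightarrow> ip n \<delta> \<delta> = 2"
    and ipd: "\<And>\<delta> \<epsilon>. \<delta> \<in> P \<Longrightarrow> \<epsilon> \<in> P \<Longrightarrow> \<delta> \<noteq> \<epsilon> \<Longrightarrow> ip n \<delta> \<epsilon> \<in> {-1,0,1}"
    and b0V: "b0 \<in> Vsp n" and b0pos: "\<And>\<delta>. \<delta> \<in> P \<Longrightarrow> ip n b0 \<delta> > 0"
begin

lemma hyp_inj:
  assumes "\<delta> \<in> P" "\<epsilon> \<in> P" "hyp n \<delta> \<subseteq> hyp n \<epsilon>" shows "\<delta> = \<epsilon>"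
proof (rule ccontr)
  assume ne: "\<delta> \<noteq> \<epsilon>"
  define c where "c = ip n \<epsilon> \<delta>"
  have c: "c \<in> {-1,0,1}" using ipd[OF assms(2,1)] ne c_def by auto
  have c2: "ip n \<delta> \<epsilon> = c" using c_def ip_sym by metis
  define p where "p = (\<lambda>k. \<epsilon> k - (c/2) * \<delta> k)"
  have pV: "p \<in> Vsp n" using inV[OF assms(1)] inV[OF assms(2)] by (auto simp: Vsp_def p_def)
  have "ip n p \<delta> = c - (c/2) * 2" unfolding p_def ip_comb by (simp add: c_def nrm[OF assms(1)])
  hence "p \<in> hyp n \<delta>" using pV by (simp add: hyp_def)
  hence "ip n p \<epsilon> = 0" using assms(3) by (auto simp: hyp_def)
  moreover have "ip n p \<epsilon> = 2 - (c/2) * c" unfolding p_def ip_comb by (simp add: c2 nrm[OF assms(2)])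
  ultimately show False using c by auto
qed

lemma hyp_inj_eq: "\<delta> \<in> P \<Longrightarrow> \<epsilon> \<in> P \<Longrightarrow> hyp n \<delta> = hyp n \<epsilon> \<longleftrightarrow> \<delta> = \<epsilon>"
  using hyp_inj by blast

lemma span2:
  assumes b1: "\<beta>1 \<in> P" and b2: "\<beta>2 \<in> P" and ne: "\<beta>1 \<noteq> \<beta>2" and d: "\<delta> \<in> P"
    and sub: "hyp n \<beta>1 \<inter> hyp n \<beta>2 \<subseteq> hyp n \<delta>"
  shows "\<delta> = \<beta>1 \<or> \<delta> = \<beta>2 \<or> \<delta> = (\<lambda>k. \<beta>1 k + \<beta>2 k) \<or> \<delta> = (\<lambda>k. \<beta>1 k - \<beta>2 k) \<or> \<delta> = (\<lambda>k. \<beta>2 k - \<beta>1 k)"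
proof (cases "\<delta> = \<beta>1 \<or> \<delta> = \<beta>2")
  case True thus ?thesis by blast
next
  case False
  define c where "c = ip n \<beta>1 \<beta>2"
  define u where "u = ip n \<delta> \<beta>1"
  define v where "v = ip n \<delta> \<beta>2"
  have c: "c \<in> {-1,0,1}" using ipd[OF b1 b2 ne] c_def by auto
  have u: "u \<in> {-1,0,1}" using ipd[OF d b1] False u_def by auto
  have v: "v \<in> {-1,0,1}" using ipd[OF d b2] False v_def by auto
  have c': "ip n \<beta>2 \<beta>1 = c" using c_def ip_sym by metis
  have u': "ip n \<beta>1 \<delta> = u" using u_def ip_sym by metis
  have v': "ip n \<beta>2 \<delta> = v" using v_def ip_sym by metis
  have D: "4 - c^2 > 0" using c by auto
  define a where "a = (2 * u - c * v)/(4 - c^2)"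
  define b where "b = (2 * v - c * u)/(4 - c^2)"
  have e1: "2 * a + b * c = u" using c unfolding a_def b_def by (auto simp: field_simps)
  have e2: "a * c + 2 * b = v" using c unfolding a_def b_def by (auto simp: field_simps)
  define w where "w = (\<lambda>k. \<delta> k - a * \<beta>1 k - b * \<beta>2 k)"
  have ipw: "ip n w z = ip n \<delta> z - a * ip n \<beta>1 z - b * ip n \<beta>2 z" for z
    unfolding w_def by (rule ip_comb2)
  have wV: "w \<in> Vsp n" using inV[OF b1] inV[OF b2] inV[OF d] by (auto simp: Vsp_def w_def)
  have "ip n w \<beta>1 = 0" using ipw[of \<beta>1] e1 by (simp add: nrm[OF b1] c' flip: u_def)
  moreover have "ip n w \<beta>2 = 0" using ipw[of \<beta>2] e2 by (simp add: nrm[OF b2] flip: c_def v_def)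
  ultimately have "w \<in> hyp n \<beta>1 \<inter> hyp n \<beta>2" using wV by (simp add: hyp_def)
  hence w0: "ip n w \<delta> = 0" using sub by (auto simp: hyp_def)
  have "ip n \<delta> w = 0" "ip n \<beta>1 w = 0" "ip n \<beta>2 w = 0"
    using w0 \<open>ip n w \<beta>1 = 0\<close> \<open>ip n w \<beta>2 = 0\<close> ip_sym[of n w] by auto
  hence "ip n w w = 0" using ipw[of w] by simp
  hence "w = (\<lambda>k. 0)" using ip_self_zero wV by blast
  hence drep: "\<delta> = (\<lambda>k. a * \<beta>1 k + b * \<beta>2 k)" unfolding w_def by (auto simp: fun_eq_iff algebra_simps dest: fun_cong)
  have "2 = ip n \<delta> \<delta>" using nrm[OF d] by simp
  also have "... = a * u + b * v" by (subst (1) drep) (simp only: ip_comb3 u' v')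
  finally have n2: "a * u + b * v = 2" by simp
  have "ip n b0 \<delta> = a * ip n b0 \<beta>1 + b * ip n b0 \<beta>2"
    by (subst drep) (metis (no_types) ip_comb3 ip_sym)
  hence pos: "a * ip n b0 \<beta>1 + b * ip n b0 \<beta>2 > 0" using b0pos[OF d] by simp
  have "(a = 1 \<and> b = 1) \<or> (a = 1 \<and> b = -1) \<or> (a = -1 \<and> b = 1)"
    by (rule arith27[OF c u v a_def b_def n2 pos b0pos[OF b1] b0pos[OF b2]])
  thus ?thesis using drep by auto
qed

end


lemma ip_comb4: "ip n (\<lambda>k. x k + a * y k) z = ip n x z + a * ip n y z"
  by (simp add: ip_def sum.distrib sum_distrib_left algebra_simps)
lemma ip_add2: "ip n z (\<lambda>k. x k + y k) = ip n z x + ip n z y"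
  by (metis ip_add ip_sym)
lemma ip_diff2: "ip n z (\<lambda>k. x k - y k) = ip n z x - ip n z y"
  by (metis ip_diff ip_sym)
lemma ipnorm_add: "ip n (\<lambda>k. x k + y k) (\<lambda>k. x k + y k) = ip n x x + 2 * ip n x y + ip n y y"
  by (simp add: ip_add ip_add2 ip_sym[of n y x])
lemma ipnorm_sub: "ip n (\<lambda>k. x k - y k) (\<lambda>k. x k - y k) = ip n x x - 2 * ip n x y + ip n y y"
  by (simp add: ip_diff ip_diff2 ip_sym[of n y x])

lemma pos_comb: "0 < a \<Longrightarrow> 0 < b \<Longrightarrow> 0 \<le> t \<Longrightarrow> t \<le> (1::real) \<Longrightarrow> 0 < a + t * (b - a)"
proof -
  assume h: "0 < a" "0 < b" "0 \<le> t" "t \<le> 1"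
  have e: "a + t * (b - a) = (1 - t) * a + t * b" by (simp add: algebra_simps)
  have "(1 - t) * a \<ge> 0" using h by simp
  show ?thesis
  proof (cases "t = 0")
    case True thus ?thesis using h by simp
  next
    case False hence "t * b > 0" using h by simp
    thus ?thesis using e \<open>(1 - t) * a \<ge> 0\<close> by linarith
  qed
qed

lemma ip_seg: "ip n (\<lambda>k. x k + t * (y k - x k)) z = ip n x z + t * (ip n y z - ip n x z)"
  by (simp add: ip_def sum.distrib sum_distrib_left sum_subtractf algebra_simps)

context rs
begin

definition Fc :: "(nat \<Rightarrow> real) set \<Rightarrow> (nat \<Rightarrow> real) \<Rightarrow> bool" where
  "Fc A \<delta> \<longleftrightarrow> (\<exists>p\<in>hyp n \<delta>. \<forall>\<epsilon>\<in>A. \<epsilon> \<noteq> \<delta> \<longrightarrow> ip n p \<epsilon> > 0)"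

lemma b0_base: "b0 \<in> base n P"
  using b0V b0pos by (simp add: base_def)

lemma open_cone: "finite A \<Longrightarrow> open {x. \<forall>\<delta>\<in>A. ip n x \<delta> > 0}"
proof -
  assume "finite A"
  moreover have "{x. \<forall>\<delta>\<in>A. ip n x \<delta> > 0} = (\<Inter>\<delta>\<in>A. {x. ip n x \<delta> > 0})" by auto
  ultimately show ?thesis using open_ip_gt by auto
qed

lemma cone_myconvex: "myconvex {y \<in> Vsp n. \<forall>\<delta>\<in>A. ip n y \<delta> > 0}"
  unfolding myconvex_def
  by (auto simp: Vsp_def ip_seg intro!: pos_comb)

lemma base2_eq:
  assumes AP: "A = {\<delta> \<in> P. H1 \<inter> H2 \<subseteq> hyp n \<delta>}"
  shows "base2 n P H1 H2 = {y \<in> Vsp n. \<forall>\<delta>\<in>A. ip n y \<delta> > 0}"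
proof -
  have finA: "finite A" using fin AP by simp
  have un: "\<Union>(subarr n P H1 H2) = (\<Union>\<delta>\<in>A. hyp n \<delta>)"
    by (auto simp: subarr_def arr_def AP)
  define S where "S = Vsp n - \<Union>(subarr n P H1 H2)"
  define K where "K = {y \<in> Vsp n. \<forall>\<delta>\<in>A. ip n y \<delta> > 0}"
  have KS: "K \<subseteq> S" unfolding K_def S_def un by (auto simp: hyp_def)
  have b0K: "b0 \<in> K" unfolding K_def using b0V b0pos AP by auto
  have Kc: "connected K" unfolding K_def by (rule myconvex_connected[OF cone_myconvex])
  show ?thesis
  proof
    show "base2 n P H1 H2 \<subseteq> {y \<in> Vsp n. \<forall>\<delta>\<in>A. ip n y \<delta> > 0}"
    proof
      fix y assume "y \<in> base2 n P H1 H2"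
      then obtain b where b: "b \<in> base n P" "connected_component S b y"
        unfolding base2_def S_def by blast
      then obtain T where T: "connected T" "T \<subseteq> S" "b \<in> T" "y \<in> T"
        unfolding connected_component_def by blast
      define U1 where "U1 = {x. \<forall>\<delta>\<in>A. ip n x \<delta> > 0}"
      define U2 where "U2 = (\<Union>\<delta>\<in>A. {x. ip n x \<delta> < 0})"
      have o1: "open U1" unfolding U1_def using open_cone[OF finA] .
      have o2: "open U2" unfolding U2_def using open_ip_lt by auto
      have d: "U1 \<inter> U2 \<inter> T = {}" unfolding U1_def U2_def by force
      have s: "T \<subseteq> U1 \<union> U2"
      proof
        fix t assume "t \<in> T"
        hence "t \<in> S" using T by blast
        hence "\<forall>\<delta>\<in>A. ip n t \<delta> \<noteq> 0" unfolding S_def un by (auto simp: hyp_def)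
        thus "t \<in> U1 \<union> U2" unfolding U1_def U2_def by (auto simp: not_less_iff_gr_or_eq)
      qed
      have "U1 \<inter> T = {} \<or> U2 \<inter> T = {}" by (rule connectedD[OF T(1) o1 o2 d s])
      moreover have "b \<in> U1" using b(1) AP unfolding U1_def base_def by auto
      ultimately have "U2 \<inter> T = {}" using T(3) by blast
      hence "y \<in> U1" using s T(4) by blast
      moreover have "y \<in> Vsp n" using T(2,4) S_def by blast
      ultimately show "y \<in> {y \<in> Vsp n. \<forall>\<delta>\<in>A. ip n y \<delta> > 0}" unfolding U1_def by simp
    qed
  next
    show "{y \<in> Vsp n. \<forall>\<delta>\<in>A. ip n y \<delta> > 0} \<subseteq> base2 n P H1 H2"
    proof
      fix y assume "y \<in> {y \<in> Vsp n. \<forall>\<delta>\<in>A. ip n y \<delta> > 0}"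
      hence "y \<in> K" unfolding K_def .
      hence "connected_component S b0 y"
        unfolding connected_component_def using Kc KS b0K by blast
      thus "y \<in> base2 n P H1 H2" unfolding base2_def S_def using b0_base by blast
    qed
  qed
qed

lemma facet_iff:
  assumes AP: "A \<subseteq> P" and dA: "\<delta> \<in> A"
  shows "contains_facet (hyp n \<delta>) {y \<in> Vsp n. \<forall>\<epsilon>\<in>A. ip n y \<epsilon> > 0} \<longleftrightarrow> Fc A \<delta>"
proof -
  define K where "K = {y \<in> Vsp n. \<forall>\<epsilon>\<in>A. ip n y \<epsilon> > 0}"
  have finA: "finite A" using fin AP finite_subset by blast
  have dP: "\<delta> \<in> P" using AP dA by blast
  define Kc where "Kc = Vsp n \<inter> (\<Inter>\<epsilon>\<in>A. {y. ip n y \<epsilon> \<ge> 0})"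
  have "closed Kc" unfolding Kc_def by (intro closed_Int closed_Vsp closed_INT ballI closed_ip_ge)
  moreover have "K \<subseteq> Kc" unfolding K_def Kc_def by fastforce
  ultimately have clK: "closure K \<subseteq> Kc" by (rule closure_minimal[rotated])
  show ?thesis unfolding K_def[symmetric]
  proof
    assume "contains_facet (hyp n \<delta>) K"
    then obtain U where U: "open U" "U \<inter> hyp n \<delta> \<noteq> {}" "U \<inter> hyp n \<delta> \<subseteq> closure K"
      unfolding contains_facet_def by blast
    then obtain p where p: "p \<in> U" "p \<in> hyp n \<delta>" by blast
    have "\<forall>\<epsilon>\<in>A. \<epsilon> \<noteq> \<delta> \<longrightarrow> ip n p \<epsilon> > 0"
    proof (intro ballI impI)
      fix \<epsilon> assume eA: "\<epsilon> \<in> A" and ne: "\<epsilon> \<noteq> \<delta>"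
      have eP: "\<epsilon> \<in> P" using eA AP by blast
      have "p \<in> Kc" using p U clK by blast
      hence ge: "ip n p \<epsilon> \<ge> 0" unfolding Kc_def using eA by blast
      show "ip n p \<epsilon> > 0"
      proof (rule ccontr)
        assume "\<not> ip n p \<epsilon> > 0"
        hence z: "ip n p \<epsilon> = 0" using ge by simp
        define c where "c = ip n \<epsilon> \<delta>"
        have c: "c \<in> {-1,0,1}" using ipd[OF eP dP ne] c_def by auto
        have c2: "ip n \<delta> \<epsilon> = c" using c_def ip_sym by metis
        define d where "d = (\<lambda>k. \<epsilon> k - (c/2) * \<delta> k)"
        have dd: "ip n d \<delta> = 0" unfolding d_def ip_comb by (simp add: c_def nrm[OF dP])
        have de: "ip n d \<epsilon> = 2 - (c/2) * c" unfolding d_def ip_comb by (simp add: c2 nrm[OF eP])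
        have dpos: "ip n d \<epsilon> > 0" using de c by auto
        obtain e where e: "e > 0" "\<forall>s. \<bar>s\<bar> < e \<longrightarrow> (\<lambda>k. p k + s * d k) \<in> U"
          using perturb[OF U(1) p(1)] by blast
        define q where "q = (\<lambda>k. p k + (- e/2) * d k)"
        have qU: "q \<in> U" unfolding q_def using e(2)[rule_format, of "- e/2"] e(1) by simp
        have qV: "q \<in> Vsp n" using p(2) inV[OF dP] inV[OF eP]
          by (auto simp: q_def d_def hyp_def Vsp_def)
        have "ip n q \<delta> = 0" unfolding q_def ip_comb4 using p(2) dd by (simp add: hyp_def)
        hence "q \<in> hyp n \<delta>" using qV by (simp add: hyp_def)
        hence "q \<in> Kc" using qU U(3) clK by blast
        hence "ip n q \<epsilon> \<ge> 0" unfolding Kc_def using eA by blast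
        moreover have "ip n q \<epsilon> = (- e/2) * ip n d \<epsilon>" unfolding q_def ip_comb4 using z by simp
        moreover have "(- e/2) * ip n d \<epsilon> < 0" using e(1) dpos by (simp add: mult_neg_pos)
        ultimately show False by simp
      qed
    qed
    thus "Fc A \<delta>" unfolding Fc_def using p by blast
  next
    assume "Fc A \<delta>"
    then obtain p where p: "p \<in> hyp n \<delta>" "\<forall>\<epsilon>\<in>A. \<epsilon> \<noteq> \<delta> \<longrightarrow> ip n p \<epsilon> > 0"
      unfolding Fc_def by blast
    define U where "U = {x. \<forall>\<epsilon>\<in>A - {\<delta>}. ip n x \<epsilon> > 0}"
    have oU: "open U" unfolding U_def using open_cone finA by simp
    have "p \<in> U \<inter> hyp n \<delta>" using p unfolding U_def by auto
    moreover have "U \<inter> hyp n \<delta> \<subseteq> closure K"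
    proof
      fix x assume x: "x \<in> U \<inter> hyp n \<delta>"
      define g where "g = (\<lambda>s::real. (\<lambda>k. x k + s * \<delta> k) :: nat \<Rightarrow> real)"
      have all: "\<forall>t. (g \<longlongrightarrow> g t) (at t)"
        using cont_line[of x \<delta>] unfolding continuous_on_def g_def by simp
      have "g 0 = x" by (simp add: g_def)
      hence "(g \<longlongrightarrow> x) (at 0)" using all by metis
      hence lim: "(g \<longlongrightarrow> x) (at_right 0)" by (rule tendsto_mono[OF at_le, rotated]) simp
      have ev: "eventually (\<lambda>s. g s \<in> K) (at_right 0)"
      proof -
        have "\<forall>\<epsilon>\<in>A. eventually (\<lambda>s. ip n (g s) \<epsilon> > 0) (at_right 0)"
        proof
          fix \<epsilon> assume eA: "\<epsilon> \<in> A"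
          have gi: "ip n (g s) \<epsilon> = ip n x \<epsilon> + s * ip n \<delta> \<epsilon>" for s
            unfolding g_def ip_comb4 ..
          show "eventually (\<lambda>s. ip n (g s) \<epsilon> > 0) (at_right 0)"
          proof (cases "\<epsilon> = \<delta>")
            case True
            have "ip n x \<delta> = 0" using x by (simp add: hyp_def)
            hence "ip n (g s) \<epsilon> = 2 * s" for s using gi[of s] True nrm[OF dP] by simp
            thus ?thesis using eventually_at_right_less[of "0::real"]
              by (auto elim: eventually_mono)
          next
            case False
            have pos: "ip n x \<epsilon> > 0" using x eA False unfolding U_def by auto
            have "((\<lambda>s. ip n x \<epsilon> + s * ip n \<delta> \<epsilon>) \<longlongrightarrow> ip n x \<epsilon> + 0 * ip n \<delta> \<epsilon>) (at_right 0)"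
              by (intro tendsto_intros)
            hence "((\<lambda>s. ip n x \<epsilon> + s * ip n \<delta> \<epsilon>) \<longlongrightarrow> ip n x \<epsilon>) (at_right 0)" by simp
            from order_tendstoD(1)[OF this pos] show ?thesis using gi by simp
          qed
        qed
        hence E: "eventually (\<lambda>s. \<forall>\<epsilon>\<in>A. ip n (g s) \<epsilon> > 0) (at_right 0)"
          by (rule eventually_ball_finite[OF finA])
        have Vs: "g s \<in> Vsp n" for s using x inV[OF dP] by (auto simp: g_def hyp_def Vsp_def)
        show ?thesis
          by (rule eventually_mono[OF E]) (simp add: K_def Vs)
      qed
      have ev2: "eventually (\<lambda>s. g s \<in> closure K) (at_right 0)"
        by (rule eventually_mono[OF ev]) (use closure_subset in blast)
      show "x \<in> closure K"
        by (rule Lim_in_closed_set[OF closed_closure ev2 _ lim]) simp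
    qed
    ultimately show "contains_facet (hyp n \<delta>) K" unfolding contains_facet_def using oU by blast
  qed
qed

end


context rs
begin

lemma basic_iff:
  assumes b1: "\<beta>1 \<in> P" and b2: "\<beta>2 \<in> P" and dP: "\<delta> \<in> P"
    and AD: "A = {\<epsilon> \<in> P. hyp n \<beta>1 \<inter> hyp n \<beta>2 \<subseteq> hyp n \<epsilon>}"
  shows "hyp n \<delta> \<in> subarr n P (hyp n \<beta>1) (hyp n \<beta>2) \<longleftrightarrow> \<delta> \<in> A"
    and "hyp n \<delta> \<in> basic n P (hyp n \<beta>1) (hyp n \<beta>2) \<longleftrightarrow> \<delta> \<in> A \<and> Fc A \<delta>"
proof -
  show s: "hyp n \<delta> \<in> subarr n P (hyp n \<beta>1) (hyp n \<beta>2) \<longleftrightarrow> \<delta> \<in> A"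
    using dP by (auto simp: subarr_def arr_def AD)
  have AP: "A \<subseteq> P" using AD by blast
  show "hyp n \<delta> \<in> basic n P (hyp n \<beta>1) (hyp n \<beta>2) \<longleftrightarrow> \<delta> \<in> A \<and> Fc A \<delta>"
    unfolding basic_def base2_eq[OF AD] using s facet_iff[OF AP] by auto
qed

lemma triple:
  assumes x: "x \<in> P" and y: "y \<in> P" and s: "(\<lambda>k. x k + y k) \<in> P"
    and AD: "A = {x, y, (\<lambda>k. x k + y k)}"
  shows "Fc A x" "Fc A y" "\<not> Fc A (\<lambda>k. x k + y k)" "ip n x y = -1"
proof -
  let ?s = "\<lambda>k. x k + y k"
  have "ip n ?s ?s = 2" using nrm[OF s] .
  hence c: "ip n x y = -1" unfolding ipnorm_add using nrm[OF x] nrm[OF y] by simp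
  thus "ip n x y = -1" .
  have c': "ip n y x = -1" using c ip_sym by metis
  have xs: "x \<noteq> ?s"
  proof
    assume "x = ?s"
    hence "y = (\<lambda>k. 0)" by (auto simp: fun_eq_iff dest: fun_cong)
    hence "ip n y y = 0" by (simp add: ip_def)
    thus False using nrm[OF y] by simp
  qed
  have ys: "y \<noteq> ?s"
  proof
    assume "y = ?s"
    hence "x = (\<lambda>k. 0)" by (auto simp: fun_eq_iff dest: fun_cong)
    hence "ip n x x = 0" by (simp add: ip_def)
    thus False using nrm[OF x] by simp
  qed
  have ixs: "ip n x ?s = 1" unfolding ip_add2 using nrm[OF x] c by simp
  have iys: "ip n y ?s = 1" unfolding ip_add2 using nrm[OF y] c' by simp
  show "Fc A x" unfolding Fc_def
  proof
    define p where "p = (\<lambda>k. y k - (-1/2) * x k)"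
    have "ip n p x = 0" unfolding p_def ip_comb using c' nrm[OF x] by simp
    moreover have "p \<in> Vsp n" using inV[OF x] inV[OF y] by (auto simp: p_def Vsp_def)
    ultimately show "p \<in> hyp n x" by (simp add: hyp_def)
    have "ip n p y = 3/2" unfolding p_def ip_comb using c nrm[OF y] by simp
    moreover have "ip n p ?s = 3/2" unfolding p_def ip_comb using ixs iys by simp
    ultimately show "\<forall>\<epsilon>\<in>A. \<epsilon> \<noteq> x \<longrightarrow> 0 < ip n p \<epsilon>"
      using AD by auto
  qed
  show "Fc A y" unfolding Fc_def
  proof
    define p where "p = (\<lambda>k. x k - (-1/2) * y k)"
    have "ip n p y = 0" unfolding p_def ip_comb using c nrm[OF y] by simp
    moreover have "p \<in> Vsp n" using inV[OF x] inV[OF y] by (auto simp: p_def Vsp_def)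
    ultimately show "p \<in> hyp n y" by (simp add: hyp_def)
    have "ip n p x = 3/2" unfolding p_def ip_comb using c' nrm[OF x] by simp
    moreover have "ip n p ?s = 3/2" unfolding p_def ip_comb using ixs iys by simp
    ultimately show "\<forall>\<epsilon>\<in>A. \<epsilon> \<noteq> y \<longrightarrow> 0 < ip n p \<epsilon>"
      using AD by auto
  qed
  show "\<not> Fc A ?s"
  proof
    assume "Fc A ?s"
    then obtain p where p: "p \<in> hyp n ?s" "\<forall>\<epsilon>\<in>A. \<epsilon> \<noteq> ?s \<longrightarrow> 0 < ip n p \<epsilon>"
      unfolding Fc_def by blast
    have "ip n p x > 0" "ip n p y > 0" using p(2) AD xs ys by auto
    moreover have "ip n p ?s = 0" using p(1) by (simp add: hyp_def)
    ultimately show False unfolding ip_add2 by simp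
  qed
qed

lemma triple_cut:
  assumes x: "x \<in> P" and y: "y \<in> P" and s: "(\<lambda>k. x k + y k) \<in> P"
    and AD: "A = {x, y, (\<lambda>k. x k + y k)}"
    and g: "\<gamma> \<in> A" "\<not> Fc A \<gamma>" and a: "\<alpha> \<in> A" "Fc A \<alpha>"
  shows "(\<lambda>k. \<gamma> k - \<alpha> k) \<in> P"
proof -
  note t = triple[OF x y s AD]
  have gs: "\<gamma> = (\<lambda>k. x k + y k)" using g t AD by auto
  have "\<alpha> = x \<or> \<alpha> = y" using a t(3) AD by auto
  moreover have "(\<lambda>k. (x k + y k) - x k) = y" "(\<lambda>k. (x k + y k) - y k) = x" by auto
  ultimately show ?thesis using gs x y by auto
qed

lemma pair1:
  assumes b1: "\<beta>1 \<in> P" and b2: "\<beta>2 \<in> P" and ne: "\<beta>1 \<noteq> \<beta>2" and A: "A \<subseteq> {\<beta>1, \<beta>2}"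
  shows "Fc A \<beta>1"
  unfolding Fc_def
proof
  define c where "c = ip n \<beta>1 \<beta>2"
  have c: "c \<in> {-1,0,1}" using ipd[OF b1 b2 ne] c_def by auto
  have c': "ip n \<beta>2 \<beta>1 = c" using c_def ip_sym by metis
  define p where "p = (\<lambda>k. \<beta>2 k - (c/2) * \<beta>1 k)"
  have "ip n p \<beta>1 = 0" unfolding p_def ip_comb using c' nrm[OF b1] by simp
  moreover have "p \<in> Vsp n" using inV[OF b1] inV[OF b2] by (auto simp: p_def Vsp_def)
  ultimately show "p \<in> hyp n \<beta>1" by (simp add: hyp_def)
  have "ip n p \<beta>2 = 2 - (c/2) * c" unfolding p_def ip_comb using c_def nrm[OF b2] by simp
  hence "ip n p \<beta>2 > 0" using c by auto
  thus "\<forall>\<epsilon>\<in>A. \<epsilon> \<noteq> \<beta>1 \<longrightarrow> 0 < ip n p \<epsilon>" using A by auto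
qed

lemma hyp_sub_add: "hyp n a \<inter> hyp n b \<subseteq> hyp n (\<lambda>k. a k + b k)"
  by (auto simp: hyp_def ip_add2)
lemma hyp_sub_diff: "hyp n a \<inter> hyp n b \<subseteq> hyp n (\<lambda>k. a k - b k)"
  by (auto simp: hyp_def ip_diff2)

lemma norm6: "ip n x x = 2 \<Longrightarrow> ip n y y = 2 \<Longrightarrow> ip n x y = -1 \<Longrightarrow>
   ip n (\<lambda>k. x k - y k) (\<lambda>k. x k - y k) = 6 \<and> ip n (\<lambda>k. y k - x k) (\<lambda>k. y k - x k) = 6"
  unfolding ipnorm_sub using ip_sym[of n x y] by simp

lemma cuts_iff:
  assumes aP: "\<alpha> \<in> P" and gP: "\<gamma> \<in> P"
  shows "cuts n P (hyp n \<alpha>) (hyp n \<gamma>) \<longleftrightarrow> (\<lambda>k. \<gamma> k - \<alpha> k) \<in> P"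
proof
  assume "cuts n P (hyp n \<alpha>) (hyp n \<gamma>)"
  then obtain H1 H2 where H: "H1 \<in> arr n P" "H2 \<in> arr n P" "H1 \<noteq> H2"
    "hyp n \<gamma> \<in> subarr n P H1 H2" "hyp n \<gamma> \<notin> basic n P H1 H2" "hyp n \<alpha> \<in> basic n P H1 H2"
    unfolding cuts_def by blast
  then obtain \<beta>1 \<beta>2 where b: "\<beta>1 \<in> P" "\<beta>2 \<in> P" "H1 = hyp n \<beta>1" "H2 = hyp n \<beta>2"
    unfolding arr_def by blast
  have ne: "\<beta>1 \<noteq> \<beta>2" using H(3) b by blast
  define A where "A = {\<epsilon> \<in> P. hyp n \<beta>1 \<inter> hyp n \<beta>2 \<subseteq> hyp n \<epsilon>}"
  note bi = basic_iff[OF b(1,2) _ A_def]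
  have gA: "\<gamma> \<in> A" and gF: "\<not> Fc A \<gamma>" and aA: "\<alpha> \<in> A" and aF: "Fc A \<alpha>"
    using H(4,5,6) bi[OF gP] bi[OF aP] b by auto
  let ?s = "\<lambda>k. \<beta>1 k + \<beta>2 k" and ?d1 = "\<lambda>k. \<beta>1 k - \<beta>2 k" and ?d2 = "\<lambda>k. \<beta>2 k - \<beta>1 k"
  have sp: "\<delta> \<in> A \<Longrightarrow> \<delta> = \<beta>1 \<or> \<delta> = \<beta>2 \<or> \<delta> = ?s \<or> \<delta> = ?d1 \<or> \<delta> = ?d2" for \<delta>
    using span2[OF b(1,2) ne] unfolding A_def by blast
  have b1A: "\<beta>1 \<in> A" and b2A: "\<beta>2 \<in> A" using b(1,2) unfolding A_def by auto
  define c where "c = ip n \<beta>1 \<beta>2"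
  have c': "ip n \<beta>2 \<beta>1 = c" using c_def ip_sym by metis
  have ns: "ip n ?s ?s = 4 + 2 * c" unfolding ipnorm_add c_def using nrm b by simp
  have nd1: "ip n ?d1 ?d1 = 4 - 2 * c" unfolding ipnorm_sub c_def using nrm b by simp
  have nd2: "ip n ?d2 ?d2 = 4 - 2 * c" unfolding ipnorm_sub using c' nrm b by simp
  show "(\<lambda>k. \<gamma> k - \<alpha> k) \<in> P"
  proof (cases "?s \<in> P")
    case True
    hence "c = -1" using nrm[OF True] ns by simp
    hence "?d1 \<notin> P" "?d2 \<notin> P" using nrm nd1 nd2 by force+
    moreover have "?s \<in> A" using True hyp_sub_add unfolding A_def by blast
    ultimately have "A = {\<beta>1, \<beta>2, ?s}" using sp b1A b2A unfolding A_def by blast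
    thus ?thesis using triple_cut[OF b(1,2) True _ gA gF aA aF] by blast
  next
    case sN: False
    show ?thesis
    proof (cases "?d1 \<in> P")
      case True
      hence "c = 1" using nrm[OF True] nd1 by simp
      have "ip n b0 ?d2 = - ip n b0 ?d1" by (simp add: ip_diff2)
      hence "?d2 \<notin> P" using b0pos[OF True] b0pos by force
      moreover have "?d1 \<in> A" using True hyp_sub_diff unfolding A_def by blast
      ultimately have A1: "A = {\<beta>1, \<beta>2, ?d1}" using sp b1A b2A sN unfolding A_def by blast
      have e: "(\<lambda>k. ?d1 k + \<beta>2 k) = \<beta>1" by auto
      have "A = {?d1, \<beta>2, (\<lambda>k. ?d1 k + \<beta>2 k)}" unfolding e A1 by auto
      from triple_cut[OF True b(2) _ this gA gF aA aF] show ?thesis using b(1) e by simp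
    next
      case d1N: False
      show ?thesis
      proof (cases "?d2 \<in> P")
        case True
        have "?d2 \<in> A" using True hyp_sub_diff unfolding A_def by blast
        hence A1: "A = {\<beta>1, \<beta>2, ?d2}" using sp b1A b2A sN d1N unfolding A_def by blast
        have e: "(\<lambda>k. ?d2 k + \<beta>1 k) = \<beta>2" by auto
        have "A = {?d2, \<beta>1, (\<lambda>k. ?d2 k + \<beta>1 k)}" unfolding e A1 by auto
        from triple_cut[OF True b(1) _ this gA gF aA aF] show ?thesis using b(2) e by simp
      next
        case False
        hence "A \<subseteq> {\<beta>1, \<beta>2}" using sp sN d1N unfolding A_def by blast
        hence "Fc A \<beta>1" "Fc A \<beta>2"
          using pair1[OF b(1,2) ne] pair1[OF b(2,1) ne[symmetric]] by (auto simp: insert_commute)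
        moreover have "\<gamma> = \<beta>1 \<or> \<gamma> = \<beta>2" using gA \<open>A \<subseteq> {\<beta>1, \<beta>2}\<close> by blast
        ultimately show ?thesis using gF by blast
      qed
    qed
  qed
next
  let ?b = "\<lambda>k. \<gamma> k - \<alpha> k"
  assume bP: "?b \<in> P"
  have ge: "\<gamma> = (\<lambda>k. \<alpha> k + ?b k)" by auto
  define c where "c = ip n \<alpha> ?b"
  have "ip n (\<lambda>k. \<alpha> k + ?b k) (\<lambda>k. \<alpha> k + ?b k) = 4 + 2 * c"
    unfolding ipnorm_add c_def using nrm[OF aP] nrm[OF bP] by simp
  hence "ip n \<gamma> \<gamma> = 4 + 2 * c" using ge by metis
  hence c: "c = -1" using nrm[OF gP] by simp
  have ne: "\<alpha> \<noteq> ?b"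
  proof
    assume "\<alpha> = ?b"
    hence "c = 2" unfolding c_def using nrm[OF aP] by metis
    thus False using c by simp
  qed
  define A where "A = {\<epsilon> \<in> P. hyp n \<alpha> \<inter> hyp n ?b \<subseteq> hyp n \<epsilon>}"
  note bi = basic_iff[OF aP bP _ A_def]
  have sp: "\<delta> \<in> A \<Longrightarrow> \<delta> = \<alpha> \<or> \<delta> = ?b \<or> \<delta> = (\<lambda>k. \<alpha> k + ?b k) \<or> \<delta> = (\<lambda>k. \<alpha> k - ?b k) \<or> \<delta> = (\<lambda>k. ?b k - \<alpha> k)" for \<delta>
    using span2[OF aP bP ne] unfolding A_def by blast
  have n1: "ip n (\<lambda>k. \<alpha> k - ?b k) (\<lambda>k. \<alpha> k - ?b k) = 6"
   and n2: "ip n (\<lambda>k. ?b k - \<alpha> k) (\<lambda>k. ?b k - \<alpha> k) = 6"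
    using norm6[of \<alpha> ?b] nrm[OF aP] nrm[OF bP] c c_def by auto
  have "(\<lambda>k. \<alpha> k - ?b k) \<notin> P" "(\<lambda>k. ?b k - \<alpha> k) \<notin> P" using n1 n2 nrm by force+
  moreover have "\<alpha> \<in> A" "?b \<in> A" using aP bP unfolding A_def by auto
  moreover have "(\<lambda>k. \<alpha> k + ?b k) \<in> A" using gP ge hyp_sub_add[of \<alpha> ?b] unfolding A_def by simp
  ultimately have AD: "A = {\<alpha>, ?b, (\<lambda>k. \<alpha> k + ?b k)}" using sp unfolding A_def by blast
  have gP': "(\<lambda>k. \<alpha> k + ?b k) \<in> P" using gP ge by simp
  note t = triple[OF aP bP gP' AD]
  have H1: "hyp n \<alpha> \<in> arr n P" "hyp n ?b \<in> arr n P" using aP bP by (auto simp: arr_def)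
  have H2: "hyp n \<alpha> \<noteq> hyp n ?b" using hyp_inj_eq[OF aP bP] ne by simp
  have "\<gamma> \<in> A" using AD ge by simp
  hence "hyp n \<gamma> \<in> subarr n P (hyp n \<alpha>) (hyp n ?b)" using bi(1)[OF gP] by simp
  moreover have "hyp n \<gamma> \<notin> basic n P (hyp n \<alpha>) (hyp n ?b)" using bi(2)[OF gP] t(3) ge by simp
  moreover have "hyp n \<alpha> \<in> basic n P (hyp n \<alpha>) (hyp n ?b)" using bi(2)[OF aP] t(1) AD by simp
  ultimately show "cuts n P (hyp n \<alpha>) (hyp n \<gamma>)" unfolding cuts_def using H1 H2 by blast
qed

lemma cutting_eq:
  assumes gP: "\<gamma> \<in> P"
  shows "cutting n P (hyp n \<gamma>) = hyp n ` {\<alpha> \<in> P. (\<lambda>k. \<gamma> k - \<alpha> k) \<in> P}"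
  unfolding cutting_def arr_def using cuts_iff[OF _ gP] by auto

lemma S_eq:
  assumes gP: "\<gamma> \<in> P"
  shows "hyp n \<gamma> - \<Union>{hyp n \<gamma> \<inter> G | G. G \<in> cutting n P (hyp n \<gamma>)}
       = {x \<in> hyp n \<gamma>. \<forall>\<alpha>\<in>{\<alpha> \<in> P. (\<lambda>k. \<gamma> k - \<alpha> k) \<in> P}. ip n x \<alpha> \<noteq> 0}"
  unfolding cutting_eq[OF gP] by (auto simp: hyp_def)

end


definition bD :: "nat \<Rightarrow> nat \<Rightarrow> real" where "bD n = (\<lambda>k. if 1 \<le> k \<and> k \<le> n then real k else 0)"

lemma mr_val: "mr i j k = (if k = j then 1 else 0) - (if k = i then 1 else 0)"
  by (simp add: mr_def eps_def)
lemma pr_val: "pr i j k = (if k = j then 1 else 0) + (if k = i then 1 else 0)"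
  by (simp add: pr_def eps_def)

definition prs :: "nat \<Rightarrow> (nat \<times> nat) set" where
  "prs n = {(i,j). 1 \<le> i \<and> i < j \<and> j \<le> n}"

lemma finite_prs: "finite (prs n)"
  by (rule finite_subset[of _ "{1..n} \<times> {1..n}"]) (auto simp: prs_def)

lemma posD_img: "posD n = (\<lambda>(i,j). mr i j) ` prs n \<union> (\<lambda>(i,j). pr i j) ` prs n"
  unfolding posD_alt prs_def by auto

lemma posD_cases:
  assumes "\<delta> \<in> posD n"
  obtains i j where "1 \<le> i" "i < j" "j \<le> n" "\<delta> = mr i j"
        | i j where "1 \<le> i" "i < j" "j \<le> n" "\<delta> = pr i j"
  using assms unfolding posD_alt by blast

lemma ip_mr_mr: "1 \<le> i \<Longrightarrow> i < j \<Longrightarrow> j \<le> n \<Longrightarrow> ip n x (mr i j) = x j - x i"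
  by (rule ip_mr) auto
lemma ip_pr_pr: "1 \<le> i \<Longrightarrow> i < j \<Longrightarrow> j \<le> n \<Longrightarrow> ip n x (pr i j) = x j + x i"
  by (rule ip_pr) auto

lemma bD_V: "bD n \<in> Vsp n" by (auto simp: bD_def Vsp_def)

interpretation D: rs n "posD n" "bD n"
proof
  show "finite (posD n)" unfolding posD_img using finite_prs by simp
next
  fix \<delta> assume "\<delta> \<in> posD n"
  thus "\<delta> \<in> Vsp n" by (cases rule: posD_cases) (auto intro: mr_V pr_V)
next
  fix \<delta> assume "\<delta> \<in> posD n"
  thus "ip n \<delta> \<delta> = 2"
    by (cases rule: posD_cases) (auto simp: ip_mr_mr ip_pr_pr mr_val pr_val)
next
  fix \<delta> \<epsilon> assume d: "\<delta> \<in> posD n" and e: "\<epsilon> \<in> posD n" and ne: "\<delta> \<noteq> \<epsilon>"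
  from e show "ip n \<delta> \<epsilon> \<in> {-1,0,1}"
  proof (cases rule: posD_cases)
    case (1 i j)
    from d show ?thesis
    proof (cases rule: posD_cases)
      case (1 k l) thus ?thesis using \<open>1 \<le> i\<close> \<open>i < j\<close> \<open>j \<le> n\<close> \<open>\<epsilon> = mr i j\<close> ne
        by (auto simp: ip_mr_mr mr_val split: if_splits)
    next
      case (2 k l) thus ?thesis using \<open>1 \<le> i\<close> \<open>i < j\<close> \<open>j \<le> n\<close> \<open>\<epsilon> = mr i j\<close> ne
        by (auto simp: ip_mr_mr pr_val split: if_splits)
    qed
  next
    case (2 i j)
    from d show ?thesis
    proof (cases rule: posD_cases)
      case (1 k l) thus ?thesis using \<open>1 \<le> i\<close> \<open>i < j\<close> \<open>j \<le> n\<close> \<open>\<epsilon> = pr i j\<close> ne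
        by (auto simp: ip_pr_pr mr_val split: if_splits)
    next
      case (2 k l) thus ?thesis using \<open>1 \<le> i\<close> \<open>i < j\<close> \<open>j \<le> n\<close> \<open>\<epsilon> = pr i j\<close> ne
        by (auto simp: ip_pr_pr pr_val split: if_splits)
    qed
  qed
next
  show "bD n \<in> Vsp n" by (rule bD_V)
next
  fix \<delta> assume "\<delta> \<in> posD n"
  thus "ip n (bD n) \<delta> > 0"
    by (cases rule: posD_cases) (auto simp: ip_mr_mr ip_pr_pr bD_def)
qed


context rs begin
lemma cut_props:
  assumes aP: "\<alpha> \<in> P" and gP: "\<gamma> \<in> P" and bP: "(\<lambda>k. \<gamma> k - \<alpha> k) \<in> P"
  shows "ip n \<gamma> \<alpha> = 1" "ip n b0 \<alpha> < ip n b0 \<gamma>"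
proof -
  have "ip n (\<lambda>k. \<gamma> k - \<alpha> k) (\<lambda>k. \<gamma> k - \<alpha> k) = 2" by (rule nrm[OF bP])
  hence "ip n \<gamma> \<gamma> - 2 * ip n \<gamma> \<alpha> + ip n \<alpha> \<alpha> = 2" unfolding ipnorm_sub .
  thus "ip n \<gamma> \<alpha> = 1" using nrm[OF aP] nrm[OF gP] by simp
  have "ip n b0 (\<lambda>k. \<gamma> k - \<alpha> k) > 0" by (rule b0pos[OF bP])
  thus "ip n b0 \<alpha> < ip n b0 \<gamma>" unfolding ip_diff2 by simp
qed
end

definition Cset :: "nat \<Rightarrow> (nat \<Rightarrow> real) \<Rightarrow> (nat \<Rightarrow> real) set" where
  "Cset n \<gamma> = {\<alpha> \<in> posD n. (\<lambda>k. \<gamma> k - \<alpha> k) \<in> posD n}"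

lemma mr_in: "1 \<le> i \<Longrightarrow> i < j \<Longrightarrow> j \<le> n \<Longrightarrow> mr i j \<in> posD n"
  unfolding posD_alt by blast
lemma pr_in: "1 \<le> i \<Longrightarrow> i < j \<Longrightarrow> j \<le> n \<Longrightarrow> pr i j \<in> posD n"
  unfolding posD_alt by blast

lemma Sm_eq:
  assumes ij: "1 \<le> i" "i < j" "j \<le> n"
  shows "{x \<in> hyp n (mr i j). \<forall>\<alpha>\<in>Cset n (mr i j). ip n x \<alpha> \<noteq> 0}
       = {x \<in> Vsp n. x i = x j \<and> (\<forall>k. i < k \<and> k < j \<longrightarrow> x k \<noteq> x i)}"
proof
  show "{x \<in> hyp n (mr i j). \<forall>\<alpha>\<in>Cset n (mr i j). ip n x \<alpha> \<noteq> 0}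
       \<subseteq> {x \<in> Vsp n. x i = x j \<and> (\<forall>k. i < k \<and> k < j \<longrightarrow> x k \<noteq> x i)}"
  proof (safe)
    fix x assume x: "x \<in> hyp n (mr i j)" "\<forall>\<alpha>\<in>Cset n (mr i j). ip n x \<alpha> \<noteq> 0"
    thus xV: "x \<in> Vsp n" by (simp add: hyp_def)
    show xij: "x i = x j" using x(1) ij by (simp add: hyp_def ip_mr_mr)
    fix k assume k: "i < k" "k < j" "x k = x i"
    have "(\<lambda>m. mr i j m - mr k j m) = mr i k" using k by (auto simp: fun_eq_iff mr_val)
    hence "mr k j \<in> Cset n (mr i j)" using k ij mr_in by (simp add: Cset_def)
    hence "ip n x (mr k j) \<noteq> 0" using x(2) by blast
    thus False using k ij xij by (simp add: ip_mr_mr)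
  qed
next
  show "{x \<in> Vsp n. x i = x j \<and> (\<forall>k. i < k \<and> k < j \<longrightarrow> x k \<noteq> x i)}
      \<subseteq> {x \<in> hyp n (mr i j). \<forall>\<alpha>\<in>Cset n (mr i j). ip n x \<alpha> \<noteq> 0}"
  proof (safe)
    fix x assume xV: "x \<in> Vsp n" and xij: "x i = x j" and xk: "\<forall>k. i < k \<and> k < j \<longrightarrow> x k \<noteq> x i"
    show "x \<in> hyp n (mr i j)" using xV xij ij by (simp add: hyp_def ip_mr_mr)
    fix \<alpha> assume aC: "\<alpha> \<in> Cset n (mr i j)" and z: "ip n x \<alpha> = 0"
    have aP: "\<alpha> \<in> posD n" and bP: "(\<lambda>k. mr i j k - \<alpha> k) \<in> posD n" using aC by (auto simp: Cset_def)
    note cp = D.cut_props[OF aP mr_in[OF ij] bP]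
    from aP show False
    proof (cases rule: posD_cases)
      case (1 k l)
      have e1: "mr i j l - mr i j k = 1" and e2: "real l - real k < real j - real i"
        using cp 1 ij by (auto simp: ip_mr_mr bD_def)
      have "x l - x k = 0" using z 1 by (simp add: ip_mr_mr)
      thus False using e1 e2 xk xij 1 ij by (auto simp: mr_val split: if_splits)
    next
      case (2 k l)
      have e1: "mr i j l + mr i j k = 1" and e2: "real l + real k < real j - real i"
        using cp 2 ij by (auto simp: ip_pr_pr ip_mr_mr bD_def)
      thus False using 2 ij by (auto simp: mr_val split: if_splits)
    qed
  qed
qed

lemma Sp_eq:
  assumes ij: "1 \<le> i" "i < j" "j \<le> n"
  shows "{x \<in> hyp n (pr i j). \<forall>\<alpha>\<in>Cset n (pr i j). ip n x \<alpha> \<noteq> 0}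
       = {x \<in> Vsp n. x i = - x j \<and> (\<forall>k. 1 \<le> k \<and> k < j \<and> k \<noteq> i \<longrightarrow> x k \<noteq> x j)
            \<and> (\<forall>k. 1 \<le> k \<and> k < i \<longrightarrow> x k \<noteq> - x j)}"
proof
  show "{x \<in> hyp n (pr i j). \<forall>\<alpha>\<in>Cset n (pr i j). ip n x \<alpha> \<noteq> 0}
       \<subseteq> {x \<in> Vsp n. x i = - x j \<and> (\<forall>k. 1 \<le> k \<and> k < j \<and> k \<noteq> i \<longrightarrow> x k \<noteq> x j)
            \<and> (\<forall>k. 1 \<le> k \<and> k < i \<longrightarrow> x k \<noteq> - x j)}"
  proof (safe)
    fix x assume x: "x \<in> hyp n (pr i j)" "\<forall>\<alpha>\<in>Cset n (pr i j). ip n x \<alpha> \<noteq> 0"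
    thus xV: "x \<in> Vsp n" by (simp add: hyp_def)
    have xij0: "x j + x i = 0" using x(1) ij by (simp add: hyp_def ip_pr_pr)
    thus xij: "x i = - x j" by simp
    { fix k assume k: "1 \<le> k" "k < j" "k \<noteq> i" "x k = x j"
      have "(\<lambda>m. pr i j m - mr k j m) \<in> posD n"
      proof (cases "k < i")
        case True
        have "(\<lambda>m. pr i j m - mr k j m) = pr k i" using k True by (auto simp: fun_eq_iff mr_val pr_val)
        thus ?thesis using k True ij pr_in by simp
      next
        case False
        have "(\<lambda>m. pr i j m - mr k j m) = pr i k" using k False by (auto simp: fun_eq_iff mr_val pr_val)
        thus ?thesis using k False ij pr_in by simp
      qed
      hence "mr k j \<in> Cset n (pr i j)" using k ij mr_in by (simp add: Cset_def)
      hence "ip n x (mr k j) \<noteq> 0" using x(2) by blast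
      thus False using k ij by (simp add: ip_mr_mr) }
    { fix k assume k: "1 \<le> k" "k < i" "x k = - x j"
      have "(\<lambda>m. pr i j m - pr k j m) = mr k i" using k by (auto simp: fun_eq_iff mr_val pr_val)
      hence "pr k j \<in> Cset n (pr i j)" using k ij mr_in pr_in by (simp add: Cset_def)
      hence "ip n x (pr k j) \<noteq> 0" using x(2) by blast
      thus False using k ij by (simp add: ip_pr_pr) }
  qed
next
  show "{x \<in> Vsp n. x i = - x j \<and> (\<forall>k. 1 \<le> k \<and> k < j \<and> k \<noteq> i \<longrightarrow> x k \<noteq> x j)
            \<and> (\<forall>k. 1 \<le> k \<and> k < i \<longrightarrow> x k \<noteq> - x j)}
      \<subseteq> {x \<in> hyp n (pr i j). \<forall>\<alpha>\<in>Cset n (pr i j). ip n x \<alpha> \<noteq> 0}"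
  proof (safe)
    fix x assume xV: "x \<in> Vsp n" and xij: "x i = - x j"
      and xk: "\<forall>k. 1 \<le> k \<and> k < j \<and> k \<noteq> i \<longrightarrow> x k \<noteq> x j"
      and xk2: "\<forall>k. 1 \<le> k \<and> k < i \<longrightarrow> x k \<noteq> - x j"
    show "x \<in> hyp n (pr i j)" using xV xij ij by (simp add: hyp_def ip_pr_pr)
    fix \<alpha> assume aC: "\<alpha> \<in> Cset n (pr i j)" and z: "ip n x \<alpha> = 0"
    have aP: "\<alpha> \<in> posD n" and bP: "(\<lambda>k. pr i j k - \<alpha> k) \<in> posD n" using aC by (auto simp: Cset_def)
    note cp = D.cut_props[OF aP pr_in[OF ij] bP]
    from aP show False
    proof (cases rule: posD_cases)
      case (1 k l)
      have e1: "pr i j l - pr i j k = 1" and e2: "real l - real k < real j + real i"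
        using cp 1 ij by (auto simp: ip_mr_mr ip_pr_pr bD_def)
      have "x l - x k = 0" using z 1 by (simp add: ip_mr_mr)
      thus False using e1 e2 xk xk2 xij 1 ij by (auto simp: pr_val split: if_splits)
    next
      case (2 k l)
      have e1: "pr i j l + pr i j k = 1" and e2: "real l + real k < real j + real i"
        using cp 2 ij by (auto simp: ip_pr_pr bD_def)
      have "x l + x k = 0" using z 2 by (simp add: ip_pr_pr)
      thus False using e1 e2 xk xk2 xij 2 ij by (auto simp: pr_val split: if_splits)
    qed
  qed
qed


definition negv :: "(nat \<Rightarrow> real) \<Rightarrow> nat \<Rightarrow> real" where "negv v = (\<lambda>m. - v m)"
definition sg :: "bool \<Rightarrow> (nat \<Rightarrow> real) \<Rightarrow> nat \<Rightarrow> real" where "sg b v = (if b then v else negv v)"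

lemma ip_negv: "ip n y (negv v) = - ip n y v"
  by (simp add: ip_def negv_def sum_negf)
lemma ip_sg: "ip n y (sg b v) = (if b then ip n y v else - ip n y v)"
  by (simp add: sg_def ip_negv)

lemma open_cone2: "finite V \<Longrightarrow> open {x. \<forall>v\<in>V. ip n x v > 0}"
proof -
  assume "finite V"
  moreover have "{x. \<forall>v\<in>V. ip n x v > 0} = (\<Inter>v\<in>V. {x. ip n x v > 0})" by auto
  ultimately show ?thesis using open_ip_gt by auto
qed

lemma conv_fiber: "myconvex {y \<in> Vsp n. ip n y g = 0 \<and> (\<forall>v\<in>V. ip n y v > 0)}"
  unfolding myconvex_def
  by (auto simp: Vsp_def ip_seg intro!: pos_comb)

lemma ip_mr_any: "1 \<le> i \<Longrightarrow> i \<le> n \<Longrightarrow> 1 \<le> j \<Longrightarrow> j \<le> n \<Longrightarrow> ip n x (mr i j) = x j - x i"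
  by (rule ip_mr)
lemma ip_pr_any: "1 \<le> i \<Longrightarrow> i \<le> n \<Longrightarrow> 1 \<le> j \<Longrightarrow> j \<le> n \<Longrightarrow> ip n x (pr i j) = x j + x i"
  by (rule ip_pr)

lemma card_PiE_bool: "finite A \<Longrightarrow> card (PiE A (\<lambda>_. UNIV :: bool set)) = 2 ^ card A"
  by (simp add: card_PiE)

lemma Hm_count:
  assumes ij: "1 \<le> i" "i < j" "j \<le> n"
  defines "S \<equiv> {x \<in> Vsp n. x i = x j \<and> (\<forall>k. i < k \<and> k < j \<longrightarrow> x k \<noteq> x i)}"
  shows "finite (closure ` components S)" "card (closure ` components S) = 2 ^ (j - i - 1)"
    "\<forall>c\<in>components S. c \<noteq> {} \<and> (\<exists>Q. open Q \<and> c = hyp n (mr i j) \<inter> Q)"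
proof -
  define K where "K = {i<..<j}"
  have finK: "finite K" by (simp add: K_def)
  define f where "f x = restrict (\<lambda>k. x i < x k) K" for x :: "nat \<Rightarrow> real"
  define V where "V x = (\<lambda>k. sg (x i < x k) (mr i k)) ` K" for x :: "nat \<Rightarrow> real"
  have finV: "finite (V x)" for x using finK by (simp add: V_def)
  have ipk: "ip n y (mr i k) = y k - y i" if "k \<in> K" for y k
    using that ij by (intro ip_mr_any) (auto simp: K_def)
  have ipij: "ip n y (mr i j) = y j - y i" for y using ij by (intro ip_mr_any) auto
  have fib: "{y\<in>S. f y = f x} = {y \<in> Vsp n. ip n y (mr i j) = 0 \<and> (\<forall>v\<in>V x. ip n y v > 0)}"
    if x: "x \<in> S" for x
  proof -
    have xk: "\<forall>k\<in>K. x k \<noteq> x i" using x by (auto simp: S_def K_def)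
    have fe: "f y = f x \<longleftrightarrow> (\<forall>k\<in>K. (y i < y k) = (x i < x k))" for y
      by (auto simp: f_def restrict_def fun_eq_iff)
    have ve: "(\<forall>v\<in>V x. ip n y v > 0) \<longleftrightarrow> (\<forall>k\<in>K. if x i < x k then y k - y i > 0 else y k - y i < 0)" for y
      by (auto simp: V_def ip_sg ipk)
    have l1: "a \<noteq> b \<Longrightarrow> (b < a) = c \<Longrightarrow> (if c then a - b > 0 else a - b < 0)" for a b :: real and c
      by auto
    have l2: "(if c then a - b > 0 else a - b < 0) \<Longrightarrow> a \<noteq> b \<and> (b < a) = c" for a b :: real and c
      by (auto split: if_splits)
    have Se: "y \<in> S \<longleftrightarrow> y \<in> Vsp n \<and> y j - y i = 0 \<and> (\<forall>k\<in>K. y k \<noteq> y i)" for y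
      by (auto simp: S_def K_def)
    show ?thesis
    proof (intro set_eqI iffI)
      fix y assume "y \<in> {y\<in>S. f y = f x}"
      hence y: "y \<in> Vsp n" "y j - y i = 0" "\<forall>k\<in>K. y k \<noteq> y i" "\<forall>k\<in>K. (y i < y k) = (x i < x k)"
        using Se fe by auto
      have "\<forall>k\<in>K. if x i < x k then y k - y i > 0 else y k - y i < 0"
        using l1 y(3,4) by blast
      thus "y \<in> {y \<in> Vsp n. ip n y (mr i j) = 0 \<and> (\<forall>v\<in>V x. ip n y v > 0)}"
        using y(1,2) ve ipij by simp
    next
      fix y assume "y \<in> {y \<in> Vsp n. ip n y (mr i j) = 0 \<and> (\<forall>v\<in>V x. ip n y v > 0)}"
      hence y: "y \<in> Vsp n" "y j - y i = 0" "\<forall>k\<in>K. if x i < x k then y k - y i > 0 else y k - y i < 0"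
        using ve ipij by auto
      have "\<forall>k\<in>K. y k \<noteq> y i \<and> (y i < y k) = (x i < x k)" using l2 y(3) by blast
      thus "y \<in> {y\<in>S. f y = f x}" using y(1,2) Se fe by auto
    qed
  qed
  have fibS: "{y\<in>S. f y = f x} = S \<inter> {y. \<forall>v\<in>V x. ip n y v > 0}" if x: "x \<in> S" for x
    using fib[OF x] by (auto simp: S_def ipij)
  have conn: "\<And>x. x \<in> S \<Longrightarrow> connected {y\<in>S. f y = f x}"
  proof -
    fix x assume "x \<in> S"
    show "connected {y\<in>S. f y = f x}"
      unfolding fib[OF \<open>x \<in> S\<close>] by (rule myconvex_connected[OF conv_fiber])
  qed
  have op: "\<And>x. x \<in> S \<Longrightarrow> \<exists>Q. open Q \<and> {y\<in>S. f y = f x} = S \<inter> Q"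
  proof -
    fix x assume "x \<in> S"
    thus "\<exists>Q. open Q \<and> {y\<in>S. f y = f x} = S \<inter> Q"
      using fibS[OF \<open>x \<in> S\<close>] open_cone2[OF finV] by blast
  qed
  have G1: "components S = (\<lambda>x. {y\<in>S. f y = f x}) ` S" by (rule GL(1)) (auto intro: conn op)
  have G2: "closure ` components S = (\<lambda>\<sigma>. closure {y\<in>S. f y = \<sigma>}) ` (f ` S)" by (rule GL(2)) (auto intro: conn op)
  have G3: "inj_on (\<lambda>\<sigma>. closure {y\<in>S. f y = \<sigma>}) (f ` S)" by (rule GL(3)) (auto intro: conn op)
  have img: "f ` S = PiE K (\<lambda>_. UNIV)"
  proof
    show "f ` S \<subseteq> PiE K (\<lambda>_. UNIV)" by (auto simp: f_def)
  next
    show "PiE K (\<lambda>_. UNIV) \<subseteq> f ` S"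
    proof
      fix \<sigma> assume s: "\<sigma> \<in> PiE K (\<lambda>_. (UNIV :: bool set))"
      define x where "x m = (if m \<in> K then (if \<sigma> m then 1 else -1) else (0::real))" for m
      have "x \<in> S" unfolding S_def using ij by (auto simp: x_def Vsp_def K_def)
      moreover have "f x = \<sigma>"
      proof -
        have "i \<notin> K" by (simp add: K_def)
        hence "f x = restrict \<sigma> K" by (auto simp: f_def x_def restrict_def fun_eq_iff)
        thus ?thesis using s by simp
      qed
      ultimately show "\<sigma> \<in> f ` S" by blast
    qed
  qed
  have finf: "finite (f ` S)" unfolding img using finK by (simp add: finite_PiE)
  show "finite (closure ` components S)" using finf G2 by simp
  have "card (closure ` components S) = card (f ` S)"
    unfolding G2 using card_image[OF G3] .
  also have "... = 2 ^ card K" unfolding img using card_PiE_bool[OF finK] .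
  also have "card K = j - i - 1" by (simp add: K_def)
  finally show "card (closure ` components S) = 2 ^ (j - i - 1)" .
  show "\<forall>c\<in>components S. c \<noteq> {} \<and> (\<exists>Q. open Q \<and> c = hyp n (mr i j) \<inter> Q)"
  proof
    fix c assume "c \<in> components S"
    then obtain x where x: "x \<in> S" "c = {y\<in>S. f y = f x}" using G1 by blast
    have "c \<noteq> {}" using x by blast
    moreover have "c = hyp n (mr i j) \<inter> {y. \<forall>v\<in>V x. ip n y v > 0}"
      using x fib[OF x(1)] by (auto simp: hyp_def)
    ultimately show "c \<noteq> {} \<and> (\<exists>Q. open Q \<and> c = hyp n (mr i j) \<inter> Q)"
      using open_cone2[OF finV] by blast
  qed
qed


lemma card_imp: "card {(a,b). (a::bool) \<longrightarrow> b} = 3"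
proof -
  have "{(a,b). (a::bool) \<longrightarrow> b} = {(False,False),(False,True),(True,True)}" by auto
  thus ?thesis by simp
qed
lemma card_imp2: "card {(a,b). (b::bool) \<longrightarrow> a} = 3"
proof -
  have "{(a,b). (b::bool) \<longrightarrow> a} = {(False,False),(True,False),(True,True)}" by auto
  thus ?thesis by simp
qed
lemma card_eqb: "card {(a,b). (a::bool) = b} = 2"
proof -
  have "{(a,b). (a::bool) = b} = {(False,False),(True,True)}" by auto
  thus ?thesis by simp
qed

lemma prod_split:
  assumes "1 \<le> i" "i < j"
  shows "(\<Prod>k\<in>{1..<j} - {i}. if k < i then (c::nat) else d) = c ^ (i - 1) * d ^ (j - i - 1)"
proof -
  have e: "{1..<j} - {i} = {1..<i} \<union> {i<..<j}" using assms by auto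
  have "(\<Prod>k\<in>{1..<j} - {i}. if k < i then c else d) =
        (\<Prod>k\<in>{1..<i}. if k < i then c else d) * (\<Prod>k\<in>{i<..<j}. if k < i then c else d)"
    unfolding e by (rule prod.union_disjoint) auto
  also have "(\<Prod>k\<in>{1..<i}. if k < i then c else d) = (\<Prod>k\<in>{1..<i}. c)" by (rule prod.cong) auto
  also have "(\<Prod>k\<in>{i<..<j}. if k < i then c else d) = (\<Prod>k\<in>{i<..<j}. d)" by (rule prod.cong) auto
  finally show ?thesis by simp
qed

lemma Hp_count:
  assumes ij: "1 \<le> i" "i < j" "j \<le> n"
  defines "S \<equiv> {x \<in> Vsp n. x i = - x j \<and> (\<forall>k. 1 \<le> k \<and> k < j \<and> k \<noteq> i \<longrightarrow> x k \<noteq> x j)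
            \<and> (\<forall>k. 1 \<le> k \<and> k < i \<longrightarrow> x k \<noteq> - x j)}"
  shows "finite (closure ` components S)"
    "int (card (closure ` components S)) = 2 ^ (j - i) * 3 ^ (i - 1) - 2 ^ (j - 2)"
    "\<forall>c\<in>components S. c \<noteq> {} \<and> (\<exists>Q. open Q \<and> c = hyp n (pr i j) \<inter> Q)"
proof -
  define K where "K = {1..<j} - {i}"
  define L where "L = {1..<i::nat}"
  have finK: "finite K" by (simp add: K_def)
  have LK: "L \<subseteq> K" using ij by (auto simp: K_def L_def)
  have inL: "k \<in> L \<longleftrightarrow> k \<in> K \<and> k < i" for k using ij by (auto simp: K_def L_def)
  define f where "f x = restrict (\<lambda>k. (x j < x k, if k < i then - x j < x k else x j < x k)) K" for x :: "nat \<Rightarrow> real"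
  define V where "V x = (\<lambda>k. sg (x j < x k) (mr j k)) ` K \<union> (\<lambda>k. sg (- x j < x k) (pr k j)) ` L" for x :: "nat \<Rightarrow> real"
  have finV: "finite (V x)" for x using finK LK by (simp add: V_def finite_subset)
  have ipk: "ip n y (mr j k) = y k - y j" if "k \<in> K" for y k
    using that ij by (intro ip_mr_any) (auto simp: K_def)
  have ipl: "ip n y (pr k j) = y j + y k" if "k \<in> L" for y k
    using that ij by (intro ip_pr_any) (auto simp: L_def)
  have ipij: "ip n y (pr i j) = y j + y i" for y using ij by (intro ip_pr_any) auto
  have Se: "y \<in> S \<longleftrightarrow> y \<in> Vsp n \<and> y j + y i = 0 \<and> (\<forall>k\<in>K. y k \<noteq> y j) \<and> (\<forall>k\<in>L. y k \<noteq> - y j)" for y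
    unfolding S_def K_def L_def by auto
  have fe: "f y = f x \<longleftrightarrow> (\<forall>k\<in>K. (y j < y k) = (x j < x k)) \<and> (\<forall>k\<in>L. (- y j < y k) = (- x j < x k))"
    for x y
  proof -
    have "f y = f x \<longleftrightarrow> (\<forall>k\<in>K. (y j < y k, if k < i then - y j < y k else y j < y k)
                               = (x j < x k, if k < i then - x j < x k else x j < x k))"
      by (auto simp: f_def restrict_def fun_eq_iff)
    thus ?thesis using inL by auto
  qed
  have ve: "(\<forall>v\<in>V x. ip n y v > 0) \<longleftrightarrow>
     (\<forall>k\<in>K. if x j < x k then y k - y j > 0 else y k - y j < 0) \<and>
     (\<forall>k\<in>L. if - x j < x k then y k - (- y j) > 0 else y k - (- y j) < 0)" for x y
  proof -
    have "(\<forall>v\<in>V x. ip n y v > 0) \<longleftrightarrow> (\<forall>k\<in>K. ip n y (sg (x j < x k) (mr j k)) > 0) \<and>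
            (\<forall>k\<in>L. ip n y (sg (- x j < x k) (pr k j)) > 0)" unfolding V_def by blast
    also have "... \<longleftrightarrow> (\<forall>k\<in>K. if x j < x k then y k - y j > 0 else y k - y j < 0) \<and>
     (\<forall>k\<in>L. if - x j < x k then y k - (- y j) > 0 else y k - (- y j) < 0)"
      by (auto simp: ip_sg ipk ipl)
    finally show ?thesis .
  qed
  have l1: "a \<noteq> b \<Longrightarrow> (b < a) = c \<Longrightarrow> (if c then a - b > 0 else a - b < 0)" for a b :: real and c
    by auto
  have l2: "(if c then a - b > 0 else a - b < 0) \<Longrightarrow> a \<noteq> b \<and> (b < a) = c" for a b :: real and c
    by (auto split: if_splits)
  have fib: "{y\<in>S. f y = f x} = {y \<in> Vsp n. ip n y (pr i j) = 0 \<and> (\<forall>v\<in>V x. ip n y v > 0)}" for x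
  proof (intro set_eqI iffI)
    fix y assume "y \<in> {y\<in>S. f y = f x}"
    hence y: "y \<in> Vsp n" "y j + y i = 0" "\<forall>k\<in>K. y k \<noteq> y j" "\<forall>k\<in>L. y k \<noteq> - y j"
      "\<forall>k\<in>K. (y j < y k) = (x j < x k)" "\<forall>k\<in>L. (- y j < y k) = (- x j < x k)"
      using Se fe by auto
    have "\<forall>k\<in>K. if x j < x k then y k - y j > 0 else y k - y j < 0"
      using l1 y(3,5) by blast
    moreover have "\<forall>k\<in>L. if - x j < x k then y k - (- y j) > 0 else y k - (- y j) < 0"
      using l1 y(4,6) by blast
    ultimately show "y \<in> {y \<in> Vsp n. ip n y (pr i j) = 0 \<and> (\<forall>v\<in>V x. ip n y v > 0)}"
      using y(1,2) ve ipij by simp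
  next
    fix y assume "y \<in> {y \<in> Vsp n. ip n y (pr i j) = 0 \<and> (\<forall>v\<in>V x. ip n y v > 0)}"
    hence y: "y \<in> Vsp n" "y j + y i = 0"
      "\<forall>k\<in>K. if x j < x k then y k - y j > 0 else y k - y j < 0"
      "\<forall>k\<in>L. if - x j < x k then y k - (- y j) > 0 else y k - (- y j) < 0"
      using ve ipij by auto
    have "\<forall>k\<in>K. y k \<noteq> y j \<and> (y j < y k) = (x j < x k)" using l2 y(3) by blast
    moreover have "\<forall>k\<in>L. y k \<noteq> - y j \<and> (- y j < y k) = (- x j < x k)" using l2 y(4) by blast
    ultimately show "y \<in> {y\<in>S. f y = f x}" using y(1,2) Se fe by auto
  qed
  have fibS: "{y\<in>S. f y = f x} = S \<inter> {y. \<forall>v\<in>V x. ip n y v > 0}" for x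
    using fib[of x] by (auto simp: Se ipij)
  have conn: "\<And>x. x \<in> S \<Longrightarrow> connected {y\<in>S. f y = f x}"
  proof -
    fix x assume "x \<in> S"
    show "connected {y\<in>S. f y = f x}"
      unfolding fib[of x] by (rule myconvex_connected[OF conv_fiber])
  qed
  have op: "\<And>x. x \<in> S \<Longrightarrow> \<exists>Q. open Q \<and> {y\<in>S. f y = f x} = S \<inter> Q"
  proof -
    fix x assume "x \<in> S"
    show "\<exists>Q. open Q \<and> {y\<in>S. f y = f x} = S \<inter> Q"
      using fibS[of x] open_cone2[OF finV[of x]] by blast
  qed
  have G1: "components S = (\<lambda>x. {y\<in>S. f y = f x}) ` S" by (rule GL(1)) (auto intro: conn op)
  have G2: "closure ` components S = (\<lambda>\<sigma>. closure {y\<in>S. f y = \<sigma>}) ` (f ` S)" by (rule GL(2)) (auto intro: conn op)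
  have G3: "inj_on (\<lambda>\<sigma>. closure {y\<in>S. f y = \<sigma>}) (f ` S)" by (rule GL(3)) (auto intro: conn op)
  define X where "X = PiE K (\<lambda>k. if k < i then {(a,b). a \<longrightarrow> b} else {(a,b). a = b})"
  define Y where "Y = PiE K (\<lambda>k. if k < i then {(a,b). b \<longrightarrow> a} else {(a,b). a = b})"
  have img: "f ` S = X \<union> Y"
  proof
    show "f ` S \<subseteq> X \<union> Y"
    proof
      fix s assume "s \<in> f ` S"
      then obtain x where x: "x \<in> S" "s = f x" by blast
      show "s \<in> X \<union> Y"
      proof (cases "x j \<ge> 0")
        case True
        hence "s \<in> X" unfolding x(2) f_def X_def restrict_PiE_iff by auto
        thus ?thesis by blast
      next
        case False
        hence "s \<in> Y" unfolding x(2) f_def Y_def restrict_PiE_iff by auto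
        thus ?thesis by blast
      qed
    qed
  next
    show "X \<union> Y \<subseteq> f ` S"
    proof
      fix \<sigma> assume s: "\<sigma> \<in> X \<union> Y"
      show "\<sigma> \<in> f ` S"
      proof (cases "\<sigma> \<in> X")
        case True
        define x where "x m = (if m = j then 1 else if m = i then -1 else if m \<in> K then
           (if fst (\<sigma> m) then 2 else if snd (\<sigma> m) then 0 else -2) else (0::real))" for m
        have "x \<in> S" unfolding Se using ij by (auto simp: x_def Vsp_def K_def L_def)
        moreover have "f x = \<sigma>"
        proof -
          have "\<forall>k\<in>K. (x j < x k, if k < i then - x j < x k else x j < x k) = \<sigma> k"
          proof
            fix k assume k: "k \<in> K"
            have kj: "k \<noteq> j" "k \<noteq> i" using k by (auto simp: K_def)
            have "\<sigma> k \<in> (if k < i then {(a,b). a \<longrightarrow> b} else {(a,b). a = b})"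
              using True k unfolding X_def by (auto simp: PiE_iff)
            thus "(x j < x k, if k < i then - x j < x k else x j < x k) = \<sigma> k"
              using kj k by (cases "\<sigma> k") (auto simp: x_def split: if_splits)
          qed
          hence "f x = restrict \<sigma> K" unfolding f_def by (auto simp: restrict_def fun_eq_iff)
          moreover have "\<sigma> \<in> PiE K (\<lambda>k. UNIV)" using True unfolding X_def by (auto simp: PiE_iff)
          ultimately show ?thesis by simp
        qed
        ultimately show ?thesis by blast
      next
        case False
        hence sY: "\<sigma> \<in> Y" using s by blast
        define x where "x m = (if m = j then -1 else if m = i then 1 else if m \<in> K then
           (if snd (\<sigma> m) then 2 else if fst (\<sigma> m) then 0 else -2) else (0::real))" for m
        have "x \<in> S" unfolding Se using ij by (auto simp: x_def Vsp_def K_def L_def)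
        moreover have "f x = \<sigma>"
        proof -
          have "\<forall>k\<in>K. (x j < x k, if k < i then - x j < x k else x j < x k) = \<sigma> k"
          proof
            fix k assume k: "k \<in> K"
            have kj: "k \<noteq> j" "k \<noteq> i" using k by (auto simp: K_def)
            have "\<sigma> k \<in> (if k < i then {(a,b). b \<longrightarrow> a} else {(a,b). a = b})"
              using sY k unfolding Y_def by (auto simp: PiE_iff)
            thus "(x j < x k, if k < i then - x j < x k else x j < x k) = \<sigma> k"
              using kj k by (cases "\<sigma> k") (auto simp: x_def split: if_splits)
          qed
          hence "f x = restrict \<sigma> K" unfolding f_def by (auto simp: restrict_def fun_eq_iff)
          moreover have "\<sigma> \<in> PiE K (\<lambda>k. UNIV)" using sY unfolding Y_def by (auto simp: PiE_iff)
          ultimately show ?thesis by simp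
        qed
        ultimately show ?thesis by blast
      qed
    qed
  qed
  have finX: "finite X" "finite Y" unfolding X_def Y_def using finK by (auto intro!: finite_PiE)
  have XY: "X \<inter> Y = PiE K (\<lambda>k. {(a,b). a = b})"
    unfolding X_def Y_def PiE_Int by (rule PiE_cong) auto
  have cK: "card K = j - 2" using ij by (simp add: K_def card_Diff_singleton)
  have cX: "card X = 3 ^ (i - 1) * 2 ^ (j - i - 1)"
  proof -
    have "card X = (\<Prod>k\<in>K. card (if k < i then {(a,b). (a::bool) \<longrightarrow> b} else {(a,b). a = b}))"
      unfolding X_def using finK by (rule card_PiE)
    also have "... = (\<Prod>k\<in>K. if k < i then 3 else 2)" by (rule prod.cong) (auto simp: card_imp card_eqb)
    finally show ?thesis unfolding K_def using prod_split[OF ij(1,2)] by simp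
  qed
  have cY: "card Y = 3 ^ (i - 1) * 2 ^ (j - i - 1)"
  proof -
    have "card Y = (\<Prod>k\<in>K. card (if k < i then {(a,b). (b::bool) \<longrightarrow> a} else {(a,b). a = b}))"
      unfolding Y_def using finK by (rule card_PiE)
    also have "... = (\<Prod>k\<in>K. if k < i then 3 else 2)" by (rule prod.cong) (auto simp: card_imp2 card_eqb)
    finally show ?thesis unfolding K_def using prod_split[OF ij(1,2)] by simp
  qed
  have cXY: "card (X \<inter> Y) = 2 ^ (j - 2)"
    unfolding XY using finK by (simp add: card_PiE card_eqb cK)
  have finf: "finite (f ` S)" unfolding img using finX by simp
  show "finite (closure ` components S)" using finf G2 by simp
  have "card (closure ` components S) = card (f ` S)"
    unfolding G2 using card_image[OF G3] .
  also have "... = card (X \<union> Y)" unfolding img ..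
  finally have c1: "card (closure ` components S) = card (X \<union> Y)" .
  have "card (X \<union> Y) + card (X \<inter> Y) = card X + card Y" using card_Un_Int[OF finX] by simp
  hence "int (card (X \<union> Y)) = int (card X) + int (card Y) - int (card (X \<inter> Y))" by linarith
  also have "... = 2 * 3 ^ (i - 1) * 2 ^ (j - i - 1) - 2 ^ (j - 2)" unfolding cX cY cXY by simp
  also have "... = 2 ^ (j - i) * 3 ^ (i - 1) - 2 ^ (j - 2)"
  proof -
    have "(2::int) ^ (j - i) = 2 * 2 ^ (j - i - 1)" using ij
      by (metis Suc_diff_Suc diff_Suc_1 diff_zero power_Suc zero_less_diff)
    thus ?thesis by simp
  qed
  finally show "int (card (closure ` components S)) = 2 ^ (j - i) * 3 ^ (i - 1) - 2 ^ (j - 2)"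
    unfolding c1 .
  show "\<forall>c\<in>components S. c \<noteq> {} \<and> (\<exists>Q. open Q \<and> c = hyp n (pr i j) \<inter> Q)"
  proof
    fix c assume "c \<in> components S"
    then obtain x where x: "x \<in> S" "c = {y\<in>S. f y = f x}" using G1 by blast
    have "c \<noteq> {}" using x by blast
    moreover have "c = hyp n (pr i j) \<inter> {y. \<forall>v\<in>V x. ip n y v > 0}"
      using x fib[of x] by (auto simp: hyp_def)
    ultimately show "c \<noteq> {} \<and> (\<exists>Q. open Q \<and> c = hyp n (pr i j) \<inter> Q)"
      using open_cone2[OF finV] by blast
  qed
qed


lemma Hm_hyp: "1 \<le> i \<Longrightarrow> i < j \<Longrightarrow> j \<le> n \<Longrightarrow> Hm n i j = hyp n (mr i j)"
  by (auto simp: Hm_def hyp_def ip_mr_mr)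
lemma Hp_hyp: "1 \<le> i \<Longrightarrow> i < j \<Longrightarrow> j \<le> n \<Longrightarrow> Hp n i j = hyp n (pr i j)"
  by (auto simp: Hp_def hyp_def ip_pr_pr)

abbreviation SS where "SS n \<delta> \<equiv> hyp n \<delta> - \<Union>{hyp n \<delta> \<inter> G | G. G \<in> cutting n (posD n) (hyp n \<delta>)}"

lemma SS_m: "1 \<le> i \<Longrightarrow> i < j \<Longrightarrow> j \<le> n \<Longrightarrow>
  SS n (mr i j) = {x \<in> Vsp n. x i = x j \<and> (\<forall>k. i < k \<and> k < j \<longrightarrow> x k \<noteq> x i)}"
  using D.S_eq[OF mr_in, of i j n] Sm_eq[of i j n] by (simp add: Cset_def)
lemma SS_p: "1 \<le> i \<Longrightarrow> i < j \<Longrightarrow> j \<le> n \<Longrightarrow>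
  SS n (pr i j) = {x \<in> Vsp n. x i = - x j \<and> (\<forall>k. 1 \<le> k \<and> k < j \<and> k \<noteq> i \<longrightarrow> x k \<noteq> x j)
            \<and> (\<forall>k. 1 \<le> k \<and> k < i \<longrightarrow> x k \<noteq> - x j)}"
  using D.S_eq[OF pr_in, of i j n] Sp_eq[of i j n] by (simp add: Cset_def)

lemma sh_m:
  assumes "1 \<le> i" "i < j" "j \<le> n"
  shows "finite (shards_of n (posD n) (hyp n (mr i j)))"
    "card (shards_of n (posD n) (hyp n (mr i j))) = 2 ^ (j - i - 1)"
    "\<forall>c\<in>components (SS n (mr i j)). c \<noteq> {} \<and> (\<exists>Q. open Q \<and> c = hyp n (mr i j) \<inter> Q)"
  using Hm_count[OF assms] unfolding shards_of_def SS_m[OF assms] by auto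

lemma sh_p:
  assumes "1 \<le> i" "i < j" "j \<le> n"
  shows "finite (shards_of n (posD n) (hyp n (pr i j)))"
    "int (card (shards_of n (posD n) (hyp n (pr i j)))) = 2 ^ (j - i) * 3 ^ (i - 1) - 2 ^ (j - 2)"
    "\<forall>c\<in>components (SS n (pr i j)). c \<noteq> {} \<and> (\<exists>Q. open Q \<and> c = hyp n (pr i j) \<inter> Q)"
  using Hp_count[OF assms] unfolding shards_of_def SS_p[OF assms] by auto

lemma sh_any:
  assumes "\<delta> \<in> posD n"
  shows "finite (shards_of n (posD n) (hyp n \<delta>))"
    "\<forall>c\<in>components (SS n \<delta>). c \<noteq> {} \<and> (\<exists>Q. open Q \<and> c = hyp n \<delta> \<inter> Q)"
proof -
  have "finite (shards_of n (posD n) (hyp n \<delta>)) \<and>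
    (\<forall>c\<in>components (SS n \<delta>). c \<noteq> {} \<and> (\<exists>Q. open Q \<and> c = hyp n \<delta> \<inter> Q))"
    using assms
  proof (cases rule: posD_cases)
    case (1 i j)
    show ?thesis unfolding \<open>\<delta> = mr i j\<close> using sh_m(1,3)[OF 1(1-3)] by (intro conjI)
  next
    case (2 i j)
    show ?thesis unfolding \<open>\<delta> = pr i j\<close> using sh_p(1,3)[OF 2(1-3)] by (intro conjI)
  qed
  thus "finite (shards_of n (posD n) (hyp n \<delta>))"
    "\<forall>c\<in>components (SS n \<delta>). c \<noteq> {} \<and> (\<exists>Q. open Q \<and> c = hyp n \<delta> \<inter> Q)" by blast+
qed

context rs begin
lemma sep:
  assumes dP: "\<delta> \<in> P" and eP: "\<epsilon> \<in> P" and c: "c \<noteq> {}" "open Q" "c = hyp n \<delta> \<inter> Q" "c \<subseteq> hyp n \<epsilon>"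
  shows "\<delta> = \<epsilon>"
proof (rule ccontr)
  assume ne: "\<delta> \<noteq> \<epsilon>"
  obtain p where p: "p \<in> c" using c(1) by blast
  define a where "a = ip n \<epsilon> \<delta>"
  have a: "a \<in> {-1,0,1}" using ipd[OF eP dP ne[symmetric]] a_def by auto
  have a2: "ip n \<delta> \<epsilon> = a" using a_def ip_sym by metis
  define d where "d = (\<lambda>k. \<epsilon> k - (a/2) * \<delta> k)"
  have dd: "ip n d \<delta> = 0" unfolding d_def ip_comb by (simp add: a_def nrm[OF dP])
  have de: "ip n d \<epsilon> = 2 - (a/2) * a" unfolding d_def ip_comb by (simp add: a2 nrm[OF eP])
  have dpos: "ip n d \<epsilon> > 0" using de a by auto
  have pQ: "p \<in> Q" and ph: "p \<in> hyp n \<delta>" and pe: "p \<in> hyp n \<epsilon>" using p c by auto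
  obtain e where e: "e > 0" "\<forall>s. \<bar>s\<bar> < e \<longrightarrow> (\<lambda>k. p k + s * d k) \<in> Q"
    using perturb[OF c(2) pQ] by blast
  define q where "q = (\<lambda>k. p k + (e/2) * d k)"
  have qQ: "q \<in> Q" unfolding q_def using e(2)[rule_format, of "e/2"] e(1) by simp
  have qV: "q \<in> Vsp n" using ph inV[OF dP] inV[OF eP] by (auto simp: q_def d_def hyp_def Vsp_def)
  have "ip n q \<delta> = 0" unfolding q_def ip_comb4 using ph dd by (simp add: hyp_def)
  hence "q \<in> c" using qV qQ c(3) by (simp add: hyp_def)
  hence "ip n q \<epsilon> = 0" using c(4) by (auto simp: hyp_def)
  moreover have "ip n q \<epsilon> = (e/2) * ip n d \<epsilon>" unfolding q_def ip_comb4 using pe by (simp add: hyp_def)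
  moreover have "(e/2) * ip n d \<epsilon> > 0" using e(1) dpos by simp
  ultimately show False by linarith
qed
end

lemma shards_sub: "X \<in> shards_of n P (hyp n \<delta>) \<Longrightarrow> X \<subseteq> hyp n \<delta>"
proof -
  assume "X \<in> shards_of n P (hyp n \<delta>)"
  then obtain c where c: "c \<in> components (hyp n \<delta> - \<Union>{hyp n \<delta> \<inter> G | G. G \<in> cutting n P (hyp n \<delta>)})" "X = closure c"
    unfolding shards_of_def by blast
  have "c \<subseteq> hyp n \<delta>" using in_components_subset[OF c(1)] by blast
  thus ?thesis using c(2) closed_hyp closure_minimal by blast
qed

lemma disj_sh:
  assumes dP: "\<delta> \<in> posD n" and eP: "\<epsilon> \<in> posD n" and ne: "\<delta> \<noteq> \<epsilon>"
  shows "shards_of n (posD n) (hyp n \<delta>) \<inter> shards_of n (posD n) (hyp n \<epsilon>) = {}"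
proof (rule ccontr)
  assume "shards_of n (posD n) (hyp n \<delta>) \<inter> shards_of n (posD n) (hyp n \<epsilon>) \<noteq> {}"
  then obtain X where X: "X \<in> shards_of n (posD n) (hyp n \<delta>)" "X \<in> shards_of n (posD n) (hyp n \<epsilon>)" by blast
  then obtain c where c: "c \<in> components (SS n \<delta>)" "X = closure c" unfolding shards_of_def by blast
  obtain Q where Q: "c \<noteq> {}" "open Q" "c = hyp n \<delta> \<inter> Q" using sh_any(2)[OF dP] c(1) by blast
  have "c \<subseteq> hyp n \<epsilon>" using shards_sub[OF X(2)] c(2) closure_subset by blast
  hence "\<delta> = \<epsilon>" using D.sep[OF dP eP Q] by blast
  thus False using ne by simp
qed

lemma pr_inj: "pr k l = pr i j \<Longrightarrow> k < l \<Longrightarrow> i < j \<Longrightarrow> k = i \<and> l = j"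
proof -
  assume e: "pr k l = pr i j" "k < l" "i < j"
  have "pr k l l = pr i j l" "pr k l k = pr i j k" "pr k l i = pr i j i" "pr k l j = pr i j j"
    using e(1) by auto
  thus ?thesis using e(2,3) by (auto simp: pr_val split: if_splits)
qed
lemma mr_inj: "mr k l = mr i j \<Longrightarrow> k < l \<Longrightarrow> i < j \<Longrightarrow> k = i \<and> l = j"
  using mr_eq by auto
lemma mr_ne_pr: "i < j \<Longrightarrow> mr k l \<noteq> pr i j"
proof
  assume "i < j" "mr k l = pr i j"
  hence "mr k l i = pr i j i" "mr k l j = pr i j j" by auto
  thus False using \<open>i < j\<close> by (auto simp: mr_val pr_val split: if_splits)
qed


lemma geo1: "(\<Sum>i=1..n. (2::int)^(n - i)) = 2^n - 1"
proof (induction n)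
  case 0 thus ?case by simp
next
  case (Suc n)
  have "(\<Sum>i=1..Suc n. (2::int)^(Suc n - i)) = (\<Sum>i=1..n. (2::int)^(Suc n - i)) + 2^(Suc n - Suc n)"
    by simp
  also have "(\<Sum>i=1..n. (2::int)^(Suc n - i)) = (\<Sum>i=1..n. 2 * 2^(n - i))"
    by (rule sum.cong) (auto simp: Suc_diff_le)
  also have "... = 2 * (\<Sum>i=1..n. (2::int)^(n - i))" by (simp add: sum_distrib_left)
  also have "... = 2 * (2^n - 1)" using Suc.IH by simp
  finally show ?case by simp
qed

lemma geo2: "(\<Sum>i=1..n. (2::int)^(n + 1 - i) * 3^(i - 1)) = 2*3^n - 2*2^n"
proof (induction n)
  case 0 thus ?case by simp
next
  case (Suc n)
  have "(\<Sum>i=1..Suc n. (2::int)^(Suc n + 1 - i) * 3^(i - 1))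
       = (\<Sum>i=1..n. (2::int)^(Suc n + 1 - i) * 3^(i - 1)) + 2^(Suc n + 1 - Suc n) * 3^(Suc n - 1)"
    by simp
  also have "(\<Sum>i=1..n. (2::int)^(Suc n + 1 - i) * 3^(i - 1)) = (\<Sum>i=1..n. 2 * (2^(n + 1 - i) * 3^(i - 1)))"
    by (rule sum.cong) (auto simp: Suc_diff_le)
  also have "... = 2 * (\<Sum>i=1..n. (2::int)^(n + 1 - i) * 3^(i - 1))" by (simp add: sum_distrib_left)
  also have "... = 2 * (2*3^n - 2*2^n)" using Suc.IH by simp
  finally show ?case by simp
qed

lemma prs_Suc: "prs (Suc n) = prs n \<union> (\<lambda>i. (i, Suc n)) ` {1..n}"
  by (auto simp: prs_def)

lemma arith_main:
  "(\<Sum>(i, j) \<in> prs n. (2::int) ^ (j - i - 1) + 2 ^ (j - i) * 3 ^ (i - 1) - 2 ^ (j - 2))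
     = 3 ^ n - int n * 2 ^ (n - 1) - int n - 1"
proof (induction n)
  case 0
  have "prs 0 = {}" by (auto simp: prs_def)
  thus ?case by simp
next
  case (Suc n)
  let ?F = "\<lambda>(i, j). (2::int) ^ (j - i - 1) + 2 ^ (j - i) * 3 ^ (i - 1) - 2 ^ (j - 2)"
  have disj: "prs n \<inter> (\<lambda>i. (i, Suc n)) ` {1..n} = {}" by (auto simp: prs_def)
  have fin: "finite (prs n)" "finite ((\<lambda>i. (i, Suc n)) ` {1..n})" using finite_prs by auto
  have "sum ?F (prs (Suc n)) = sum ?F (prs n) + sum ?F ((\<lambda>i. (i, Suc n)) ` {1..n})"
    unfolding prs_Suc by (rule sum.union_disjoint[OF fin disj])
  also have "sum ?F ((\<lambda>i. (i, Suc n)) ` {1..n}) = (\<Sum>i=1..n. ?F (i, Suc n))"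
    by (subst sum.reindex) (auto simp: inj_on_def)
  also have "... = (\<Sum>i=1..n. (2::int)^(n - i) + 2^(n + 1 - i) * 3^(i - 1) - 2^(n - 1))"
    by (rule sum.cong) (auto simp: Suc_diff_le)
  also have "... = (\<Sum>i=1..n. (2::int)^(n - i)) + (\<Sum>i=1..n. 2^(n + 1 - i) * 3^(i - 1)) - (\<Sum>i=1..n. 2^(n - 1))"
    by (simp add: sum.distrib sum_subtractf)
  also have "... = (2^n - 1) + (2*3^n - 2*2^n) - int n * 2^(n - 1)"
    unfolding geo1 geo2 by simp
  finally have "sum ?F (prs (Suc n)) = (3 ^ n - int n * 2 ^ (n - 1) - int n - 1) + ((2^n - 1) + (2*3^n - 2*2^n) - int n * 2^(n - 1))"
    using Suc.IH by simp
  moreover obtain T where T: "T = sum ?F (prs (Suc n))" by blast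
  ultimately have T2: "T = (3 ^ n - int n * 2 ^ (n - 1) - int n - 1) + ((2^n - 1) + (2*3^n - 2*2^n) - int n * 2^(n - 1))"
    by simp
  have m: "int n * 2^(n - 1) * 2 = int n * 2^n" by (cases n) auto
  have "T = 3 ^ Suc n - int (Suc n) * 2 ^ (Suc n - 1) - int (Suc n) - 1"
    unfolding T2 using m by (simp add: algebra_simps) (metis mult.commute)
  thus ?case using T by simp
qed


theorem mainTheorem10:
  fixes n :: nat
  assumes "2 \<le> n"
  shows "(\<forall>i j. 1 \<le> i \<and> i < j \<and> j \<le> n \<longrightarrow>
            finite (shards_of n (posD n) (Hm n i j)) \<and>
            int (card (shards_of n (posD n) (Hm n i j))) = 2 ^ (j - i - 1) \<and>
            finite (shards_of n (posD n) (Hp n i j)) \<and>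
            int (card (shards_of n (posD n) (Hp n i j))) = 2 ^ (j - i) * 3 ^ (i - 1) - 2 ^ (j - 2))
       \<and> finite (shards n (posD n))
       \<and> int (card (shards n (posD n))) =
           (\<Sum>(i, j) \<in> {(i, j). 1 \<le> i \<and> i < j \<and> j \<le> n}.
              (2::int) ^ (j - i - 1) + 2 ^ (j - i) * 3 ^ (i - 1) - 2 ^ (j - 2))
       \<and> (\<Sum>(i, j) \<in> {(i, j). 1 \<le> i \<and> i < j \<and> j \<le> n}.
              (2::int) ^ (j - i - 1) + 2 ^ (j - i) * 3 ^ (i - 1) - 2 ^ (j - 2))
           = 3 ^ n - int n * 2 ^ (n - 1) - int n - 1"
proof -
  have prsE: "{(i, j). 1 \<le> i \<and> i < j \<and> j \<le> n} = prs n" by (simp add: prs_def)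
  define A where "A \<delta> = shards_of n (posD n) (hyp n \<delta>)" for \<delta>
  have part1: "\<forall>i j. 1 \<le> i \<and> i < j \<and> j \<le> n \<longrightarrow>
            finite (shards_of n (posD n) (Hm n i j)) \<and>
            int (card (shards_of n (posD n) (Hm n i j))) = 2 ^ (j - i - 1) \<and>
            finite (shards_of n (posD n) (Hp n i j)) \<and>
            int (card (shards_of n (posD n) (Hp n i j))) = 2 ^ (j - i) * 3 ^ (i - 1) - 2 ^ (j - 2)"
  proof (intro allI impI)
    fix i j assume h: "1 \<le> i \<and> i < j \<and> j \<le> n"
    hence h1: "1 \<le> i" "i < j" "j \<le> n" by auto
    show "finite (shards_of n (posD n) (Hm n i j)) \<and>
            int (card (shards_of n (posD n) (Hm n i j))) = 2 ^ (j - i - 1) \<and>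
            finite (shards_of n (posD n) (Hp n i j)) \<and>
            int (card (shards_of n (posD n) (Hp n i j))) = 2 ^ (j - i) * 3 ^ (i - 1) - 2 ^ (j - 2)"
      unfolding Hm_hyp[OF h1] Hp_hyp[OF h1]
      using sh_m[OF h1] sh_p[OF h1] by simp
  qed
  have shU: "shards n (posD n) = (\<Union>\<delta>\<in>posD n. A \<delta>)"
    by (simp add: shards_def arr_def A_def)
  have finA: "\<forall>\<delta>\<in>posD n. finite (A \<delta>)" using sh_any(1) by (simp add: A_def)
  have fin: "finite (shards n (posD n))" unfolding shU using D.fin finA by blast
  have cardU: "card (shards n (posD n)) = (\<Sum>\<delta>\<in>posD n. card (A \<delta>))"
    unfolding shU
  proof (rule card_UN_disjoint[OF D.fin finA])
    show "\<forall>i\<in>posD n. \<forall>j\<in>posD n. i \<noteq> j \<longrightarrow> A i \<inter> A j = {}"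
      using disj_sh by (simp add: A_def)
  qed
  let ?m = "\<lambda>(i,j). mr i j" and ?p = "\<lambda>(i,j). pr i j"
  have injm: "inj_on ?m (prs n)" by (auto simp: inj_on_def prs_def dest: mr_inj)
  have injp: "inj_on ?p (prs n)" by (auto simp: inj_on_def prs_def dest: pr_inj)
  have dmp: "?m ` prs n \<inter> ?p ` prs n = {}" using mr_ne_pr by (auto simp: prs_def)
  have "(\<Sum>\<delta>\<in>posD n. card (A \<delta>)) = (\<Sum>\<delta>\<in>?m ` prs n. card (A \<delta>)) + (\<Sum>\<delta>\<in>?p ` prs n. card (A \<delta>))"
    unfolding posD_img by (rule sum.union_disjoint) (use finite_prs dmp in auto)
  also have "... = (\<Sum>q\<in>prs n. card (A (?m q))) + (\<Sum>q\<in>prs n. card (A (?p q)))"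
    by (simp add: sum.reindex[OF injm] sum.reindex[OF injp])
  finally have cs: "card (shards n (posD n)) = (\<Sum>q\<in>prs n. card (A (?m q))) + (\<Sum>q\<in>prs n. card (A (?p q)))"
    using cardU by simp
  have "int (card (shards n (posD n))) = (\<Sum>q\<in>prs n. int (card (A (?m q))) + int (card (A (?p q))))"
    unfolding cs by (simp add: sum.distrib)
  also have "... = (\<Sum>(i, j) \<in> prs n. (2::int) ^ (j - i - 1) + 2 ^ (j - i) * 3 ^ (i - 1) - 2 ^ (j - 2))"
  proof (rule sum.cong[OF refl])
    fix q assume q: "q \<in> prs n"
    then obtain i j where ij: "q = (i, j)" "1 \<le> i" "i < j" "j \<le> n" by (auto simp: prs_def)
    show "int (card (A (?m q))) + int (card (A (?p q))) =
          (case q of (i, j) \<Rightarrow> (2::int) ^ (j - i - 1) + 2 ^ (j - i) * 3 ^ (i - 1) - 2 ^ (j - 2))"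
      using sh_m(2)[OF ij(2-4)] sh_p(2)[OF ij(2-4)] unfolding ij(1) A_def by simp
  qed
  finally have part2: "int (card (shards n (posD n))) =
      (\<Sum>(i, j) \<in> prs n. (2::int) ^ (j - i - 1) + 2 ^ (j - i) * 3 ^ (i - 1) - 2 ^ (j - 2))" .
  show ?thesis unfolding prsE using part1 fin part2 arith_main by blast
qed


end
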